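(* Let $k\ge 1$. The square complex orthogonal designs $\mathcal{C}_k$ and $\mathcal{C}_k^-$ induce two non-equivalent irreducible representations of dimension $2^{k-1}$ of the group $\mathcal{G}_{2k-1}$.
   Context: Let $z_1,\ldots,z_k$ be formal complex indeterminates, with $z_i^*$ the complex conjugate. Define recursively $\mathcal{C}_1=(z_1)$ and, for $k>1$, the $2^{k-1}\times 2^{k-1}$ matrix $\mathcal{C}_k=\begin{pmatrix}\mathcal{C}_{k-1} & z_k I_{2^{k-2}}\\ -z_k^* I_{2^{k-2}} & \mathcal{C}_{k-1}^H\end{pmatrix}$, and let $\mathcal{C}_k^-$ be obtained from $\mathcal{C}_k$ by replacing $z_k$ with $z_k^*$. Both satisfy $\mathcal{C}^H\mathcal{C}=(\sum_i|z_i|^2)I$. For $m\ge 0$, $\mathcal{G}_{m}$ denotes the group of order $2^{m+1}$ generated by $g_1,\ldots,g_m$ and a central element $-1$ of order $2$, subject to $g_i^2=-1$ and $g_ig_j=-g_jg_i$ for $i\ne j$; its elements are $\pm\prod_{i\in S}g_i$, $S\subseteq\{1,\ldots,m\}$. Representation induced by a square design: write a square design $\mathcal{O}$ of size $n$ in the $k$ variables as $\mathcal{O}=\sum_{i=1}^k(z_iA_i+z_i^*B_i)$ with $A_i,B_i\in M_n(\mathbb{C})$; with $z_i=x_i+\sqrt{-1}y_i$ this is $\sum_{i=1}^k x_iF_i+\sum_{i=1}^k y_iF_{k+i}$ where $F_i=A_i+B_i$, $F_{k+i}=\sqrt{-1}(A_i-B_i)$. Set $E_{j}=F_{j+1}$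 for $j=0,\ldots,2k-1$ (these are unitary and satisfy $E_i^HE_j+E_j^HE_i=0$ for $i\neq j$), and $G_i=E_0^HE_i$ for $i=1,\ldots,2k-1$. The induced representation $\rho:\mathcal{G}_{2k-1}\to U_n(\mathbb{C})$ is the homomorphism with $\rho(g_i)=G_i$ and $\rho(-1)=-I_n$. *)

theory Defs
  imports "Jordan_Normal_Form.Matrix" "HOL-Algebra.Group"
begin

definition mat_H :: "complex mat \<Rightarrow> complex mat" where
  "mat_H A = transpose_mat (map_mat cnj A)"

text \<open>A design in the variables z_1,...,z_k is represented as the function mapping
  a value assignment z (index i gives z_i) to the resulting complex matrix.\<close>

fun CC :: "nat \<Rightarrow> (nat \<Rightarrow> complex) \<Rightarrow> complex mat" where
  "CC 0 z = 0\<^sub>m 0 0"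
| "CC (Suc 0) z = mat 1 1 (\<lambda>_. z 1)"
| "CC (Suc (Suc k)) z =
     four_block_mat (CC (Suc k) z) (z (k+2) \<cdot>\<^sub>m 1\<^sub>m (2^k))
                    ((- cnj (z (k+2))) \<cdot>\<^sub>m 1\<^sub>m (2^k)) (mat_H (CC (Suc k) z))"

definition CCminus :: "nat \<Rightarrow> (nat \<Rightarrow> complex) \<Rightarrow> complex mat" where
  "CCminus k z = CC k (z(k := cnj (z k)))"

text \<open>O = sum_i x_i F_i + sum_i y_i F_(k+i), with z_i = x_i + sqrt(-1) y_i. Since O is
  real-linear in (x,y), F_i is O at z = e_i and F_(k+i) is O at z = sqrt(-1) e_i.\<close>
definition Fcoef :: "((nat \<Rightarrow> complex) \<Rightarrow> complex mat) \<Rightarrow> nat \<Rightarrow> nat \<Rightarrow> complex mat" where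
  "Fcoef D k j =
     (if j \<le> k then D (\<lambda>i. if i = j then 1 else 0)
      else D (\<lambda>i. if i = j - k then \<i> else 0))"

definition Egen :: "((nat \<Rightarrow> complex) \<Rightarrow> complex mat) \<Rightarrow> nat \<Rightarrow> nat \<Rightarrow> complex mat" where
  "Egen D k j = Fcoef D k (j + 1)"

definition Ggen :: "((nat \<Rightarrow> complex) \<Rightarrow> complex mat) \<Rightarrow> nat \<Rightarrow> nat \<Rightarrow> complex mat" where
  "Ggen D k i = mat_H (Egen D k 0) * Egen D k i"

text \<open>Element (b, S) with S a subset of {1..m} stands for (-1)^b * g_(i1) * ... * g_(ir),
  where S = {i1 < ... < ir}. Multiplication follows from g_i^2 = -1, g_i g_j = - g_j g_i.\<close>
definition Gm_mult :: "bool \<times> nat set \<Rightarrow> bool \<times> nat set \<Rightarrow> bool \<times> nat set" where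
  "Gm_mult x y = (case x of (a, S) \<Rightarrow> case y of (b, T) \<Rightarrow>
     ((a \<noteq> b) \<noteq> odd (card {(i, j). i \<in> S \<and> j \<in> T \<and> j < i} + card (S \<inter> T)),
      (S - T) \<union> (T - S)))"

definition Gm :: "nat \<Rightarrow> (bool \<times> nat set) monoid" where
  "Gm m = \<lparr>carrier = {(b, S). S \<subseteq> {1..m}}, mult = Gm_mult, one = (False, {})\<rparr>"

definition Ugrp :: "nat \<Rightarrow> complex mat monoid" where
  "Ugrp n = \<lparr>carrier = {M \<in> carrier_mat n n. mat_H M * M = 1\<^sub>m n},
             mult = (*), one = 1\<^sub>m n\<rparr>"

definition rep_of_gens :: "nat \<Rightarrow> (nat \<Rightarrow> complex mat) \<Rightarrow> bool \<times> nat set \<Rightarrow> complex mat" where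
  "rep_of_gens n Gs x = (case x of (b, S) \<Rightarrow>
     (if b then (-1) \<cdot>\<^sub>m 1\<^sub>m n else 1\<^sub>m n) *
       foldr (\<lambda>i M. Gs i * M) (sorted_list_of_set S) (1\<^sub>m n))"

definition induced_rep :: "((nat \<Rightarrow> complex) \<Rightarrow> complex mat) \<Rightarrow> nat \<Rightarrow> nat
     \<Rightarrow> bool \<times> nat set \<Rightarrow> complex mat" where
  "induced_rep D k n = rep_of_gens n (Ggen D k)"

definition invariant_subspace :: "nat \<Rightarrow> complex mat set \<Rightarrow> complex vec set \<Rightarrow> bool" where
  "invariant_subspace n M W \<longleftrightarrow>
     W \<subseteq> carrier_vec n \<and> 0\<^sub>v n \<in> W \<and>
     (\<forall>v\<in>W. \<forall>w\<in>W. v + w \<in> W) \<and> (\<forall>c. \<forall>v\<in>W. c \<cdot>\<^sub>v v \<in> W) \<and>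
     (\<forall>A\<in>M. \<forall>v\<in>W. A *\<^sub>v v \<in> W)"

definition irreducible_rep :: "('g, 'b) monoid_scheme \<Rightarrow> nat \<Rightarrow> ('g \<Rightarrow> complex mat) \<Rightarrow> bool" where
  "irreducible_rep G n \<rho> \<longleftrightarrow> n > 0 \<and>
     (\<forall>W. invariant_subspace n (\<rho> ` carrier G) W \<longrightarrow> W = {0\<^sub>v n} \<or> W = carrier_vec n)"

definition equivalent_reps :: "('g, 'b) monoid_scheme \<Rightarrow> nat \<Rightarrow> ('g \<Rightarrow> complex mat)
     \<Rightarrow> ('g \<Rightarrow> complex mat) \<Rightarrow> bool" where
  "equivalent_reps G n \<rho> \<sigma> \<longleftrightarrow>
     (\<exists>T \<in> carrier_mat n n. invertible_mat T \<and> (\<forall>g \<in> carrier G. T * \<rho> g = \<sigma> g * T))"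

end

theory Submission
  imports Defs
begin

lemma dim_mat_H[simp]: "dim_row (mat_H A) = dim_col A" "dim_col (mat_H A) = dim_row A"
  by (auto simp: mat_H_def)

lemma index_mat_H[simp]: "i < dim_col A \<Longrightarrow> j < dim_row A \<Longrightarrow> mat_H A $$ (i,j) = cnj (A $$ (j,i))"
  by (simp add: mat_H_def)

lemma mat_H_carrier[simp]: "A \<in> carrier_mat n m \<Longrightarrow> mat_H A \<in> carrier_mat m n"
  by (intro carrier_matI) (auto dest: carrier_matD)

lemma mat_H_mult: assumes "A \<in> carrier_mat n k" "B \<in> carrier_mat k m"
  shows "mat_H (A*B) = mat_H B * mat_H A"
proof (rule eq_matI)
  fix i j assume ij: "i < dim_row (mat_H B * mat_H A)" "j < dim_col (mat_H B * mat_H A)"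
  then have i: "i < m" and j: "j < n" using assms by auto
  have "mat_H (A*B) $$ (i,j) = cnj (row A j \<bullet> col B i)"
    using i j assms by simp
  also have "\<dots> = (\<Sum>l<k. cnj (A $$ (j,l)) * cnj (B $$ (l,i)))"
    using i j assms by (simp add: scalar_prod_def lessThan_atLeast0)
  also have "\<dots> = row (mat_H B) i \<bullet> col (mat_H A) j"
    using i j assms by (simp add: scalar_prod_def lessThan_atLeast0 mult.commute)
  also have "\<dots> = (mat_H B * mat_H A) $$ (i,j)"
    using i j assms by simp
  finally show "mat_H (A*B) $$ (i,j) = (mat_H B * mat_H A) $$ (i,j)" .
qed (use assms in auto)

lemma mat_H_mat_H[simp]: "mat_H (mat_H A) = A"
  by (rule eq_matI) auto

lemma mat_H_one[simp]: "mat_H (1\<^sub>m n) = 1\<^sub>m n"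
  by (rule eq_matI) auto

lemma mat_H_smult1[simp]: "mat_H (c \<cdot>\<^sub>m 1\<^sub>m n) = cnj c \<cdot>\<^sub>m 1\<^sub>m n"
  by (rule eq_matI) auto

lemma mat_H_uminus: "mat_H (- A) = - mat_H A"
  by (rule eq_matI) auto

lemma mat_H_zero[simp]: "mat_H (0\<^sub>m n m) = 0\<^sub>m m n"
  by (rule eq_matI) auto

lemma mat_H_smult: "mat_H (c \<cdot>\<^sub>m A) = cnj c \<cdot>\<^sub>m mat_H A"
  by (rule eq_matI) auto

lemma mat_H_four: assumes "A \<in> carrier_mat n1 m1" "B \<in> carrier_mat n1 m2" "C \<in> carrier_mat n2 m1" "D \<in> carrier_mat n2 m2"
  shows "mat_H (four_block_mat A B C D) = four_block_mat (mat_H A) (mat_H C) (mat_H B) (mat_H D)"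
  using assms unfolding mat_H_def
  by (subst map_four_block_mat[OF assms], subst transpose_four_block_mat, auto)

lemma smult1_left: "dim_row (X::complex mat) = n \<Longrightarrow> (c \<cdot>\<^sub>m 1\<^sub>m n) * X = c \<cdot>\<^sub>m X"
  by (metis carrier_matI mult_smult_assoc_mat[OF one_carrier_mat] left_mult_one_mat)

lemma smult1_right: "dim_col (X::complex mat) = n \<Longrightarrow> X * (c \<cdot>\<^sub>m 1\<^sub>m n) = c \<cdot>\<^sub>m X"
  by (metis carrier_matI mult_smult_distrib[OF _ one_carrier_mat] right_mult_one_mat)

lemma smult_smult_mat: "s \<cdot>\<^sub>m (t \<cdot>\<^sub>m (X::complex mat)) = (s*t) \<cdot>\<^sub>m X"
  by (rule eq_matI) auto

lemma one_smult_mat': "(1::complex) \<cdot>\<^sub>m X = X"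
  by (rule eq_matI) auto

lemma mone_smult_mat: "(-1::complex) \<cdot>\<^sub>m X = - X"
  by (rule eq_matI) auto

lemma smult_mult_smult: "A \<in> carrier_mat n k \<Longrightarrow> B \<in> carrier_mat k m \<Longrightarrow>
   (s \<cdot>\<^sub>m A) * (t \<cdot>\<^sub>m (B::complex mat)) = (s*t) \<cdot>\<^sub>m (A*B)"
  by (simp add: mult_smult_assoc_mat[of _ n k _ m] mult_smult_distrib[of _ n k _ m] smult_smult_mat mult.commute)

locale gensys =
  fixes n :: nat and R :: "nat set" and Gs :: "nat \<Rightarrow> complex mat"
  assumes fin: "finite R"
    and Gc: "\<And>i. i \<in> R \<Longrightarrow> Gs i \<in> carrier_mat n n"
    and Gsq: "\<And>i. i \<in> R \<Longrightarrow> Gs i * Gs i = - 1\<^sub>m n"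
    and Gu: "\<And>i. i \<in> R \<Longrightarrow> mat_H (Gs i) * Gs i = 1\<^sub>m n"
    and Gac: "\<And>i j. i \<in> R \<Longrightarrow> j \<in> R \<Longrightarrow> i \<noteq> j \<Longrightarrow> Gs i * Gs j = - (Gs j * Gs i)"
begin

definition P :: "nat set \<Rightarrow> complex mat" where
  "P S = foldr (\<lambda>i M. Gs i * M) (sorted_list_of_set S) (1\<^sub>m n)"

lemma P_empty[simp]: "P {} = 1\<^sub>m n" by (simp add: P_def)

lemma P_min: "S \<noteq> {} \<Longrightarrow> finite S \<Longrightarrow> P S = Gs (Min S) * P (S - {Min S})"
  by (simp add: P_def sorted_list_of_set_nonempty)

lemma P_insert_min: assumes "finite S" "\<forall>x\<in>S. a < x" shows "P (insert a S) = Gs a * P S"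
proof -
  have "Min (insert a S) = a" using assms by (auto intro!: Min_eqI)
  moreover have "insert a S - {a} = S" using assms by auto
  ultimately show ?thesis using P_min[of "insert a S"] assms by simp
qed

lemma P_carrier: "S \<subseteq> R \<Longrightarrow> P S \<in> carrier_mat n n"
proof (induction "card S" arbitrary: S rule: less_induct)
  case less
  show ?case
  proof (cases "S = {}")
    case True then show ?thesis by simp
  next
    case False
    have fS: "finite S" using less.prems fin finite_subset by auto
    have m: "Min S \<in> S" using Min_in[OF fS False] .
    have "card (S - {Min S}) < card S" using fS m by (meson card_Diff1_less)
    then have "P (S - {Min S}) \<in> carrier_mat n n" using less by auto
    then show ?thesis using P_min[OF False fS] Gc[of "Min S"] m less.prems by auto
  qed
qed

lemma P_left: "a \<in> R \<Longrightarrow> U \<subseteq> R \<Longrightarrow>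
   Gs a * P U = (-1)^(card {u\<in>U. u<a} + (if a\<in>U then 1 else 0)) \<cdot>\<^sub>m P ((U - {a}) \<union> ({a} - U))"
proof (induction "card U" arbitrary: U rule: less_induct)
  case less
  have aR: "a \<in> R" and UR: "U \<subseteq> R" by fact+
  have fU: "finite U" using UR fin finite_subset by auto
  have Ga: "Gs a \<in> carrier_mat n n" using Gc aR .
  show ?case
  proof (cases "U = {}")
    case True
    have "P {a} = Gs a" using P_insert_min[of "{}" a] Ga by simp
    then show ?thesis using True Ga by (simp add: one_smult_mat')
  next
    case False
    define b where "b = Min U"
    define U' where "U' = U - {b}"
    have bU: "b \<in> U" unfolding b_def using Min_in[OF fU False] .
    have bmin: "\<forall>x\<in>U'. b < x"
    proof
      fix x assume "x \<in> U'"
      then have "x \<in> U" "x \<noteq> b" unfolding U'_def by auto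
      then show "b < x" unfolding b_def using Min_le[OF fU] le_neq_trans by (metis b_def)
    qed
    have fU': "finite U'" using fU U'_def by auto
    have U'R: "U' \<subseteq> R" using UR U'_def by auto
    have bR: "b \<in> R" using bU UR by auto
    have Gb: "Gs b \<in> carrier_mat n n" using Gc bR .
    have PU': "P U' \<in> carrier_mat n n" using P_carrier U'R by auto
    have PU: "P U = Gs b * P U'" unfolding U'_def b_def using P_min[OF False fU] .
    have Ueq: "U = insert b U'" using bU U'_def by auto
    consider "a < b" | "a = b" | "b < a" by linarith
    then show ?thesis
    proof cases
      case 1
      have c0: "{u\<in>U. u<a} = {}" using 1 bmin Ueq by auto
      have aU: "a \<notin> U" using 1 bmin Ueq by auto
      have e: "(U - {a}) \<union> ({a} - U) = insert a U" using aU by auto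
      have "\<forall>x\<in>U. a < x" using 1 bmin Ueq by auto
      then have PI: "P (insert a U) = Gs a * P U"
        using P_insert_min[of U a] fU by blast
      show ?thesis unfolding e PI c0 using aU by (simp add: one_smult_mat')
    next
      case 2
      have c0: "{u\<in>U. u<a} = {}" using 2 bmin Ueq by auto
      have aU: "a \<in> U" using 2 bU by simp
      have e: "(U - {a}) \<union> ({a} - U) = U'" using 2 U'_def bU by auto
      have "Gs a * P U = (Gs a * Gs a) * P U'" using PU 2 Ga PU' by simp
      also have "\<dots> = - P U'" using Gsq[OF aR] PU' by simp
      finally show ?thesis unfolding c0 e using aU by (simp add: mone_smult_mat)
    next
      case 3
      define c' where "c' = card {u\<in>U'. u<a} + (if a\<in>U' then 1 else 0)"
      define V where "V = (U' - {a}) \<union> ({a} - U')"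
      have VR: "V \<subseteq> R" using U'R aR V_def by auto
      have PV: "P V \<in> carrier_mat n n" using P_carrier VR by auto
      have "card U' < card U" using fU bU U'_def by (meson card_Diff1_less)
      then have IH: "Gs a * P U' = (-1)^c' \<cdot>\<^sub>m P V" using less aR U'R c'_def V_def by blast
      have ab: "a \<noteq> b" using 3 by simp
      have fV: "finite V" using fU' V_def by auto
      have bV: "\<forall>x\<in>V. b < x" using bmin 3 V_def by auto
      have PbV: "P (insert b V) = Gs b * P V" using P_insert_min[OF fV bV] .
      have e: "(U - {a}) \<union> ({a} - U) = insert b V" using Ueq ab V_def bmin by auto
      have cnt: "card {u\<in>U. u<a} + (if a\<in>U then 1 else 0) = Suc c'"
      proof -
        have "{u\<in>U. u<a} = insert b {u\<in>U'. u<a}" using Ueq 3 by auto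
        moreover have "b \<notin> {u\<in>U'. u<a}" using bmin by auto
        moreover have "finite {u\<in>U'. u<a}" using fU' by auto
        ultimately have "card {u\<in>U. u<a} = Suc (card {u\<in>U'. u<a})" by simp
        moreover have "(a \<in> U) = (a \<in> U')" using Ueq ab by auto
        ultimately show ?thesis unfolding c'_def by simp
      qed
      have "Gs a * P U = (Gs a * Gs b) * P U'" using PU Ga Gb PU' by simp
      also have "\<dots> = - (Gs b * Gs a) * P U'" using Gac[OF aR bR ab] by simp
      also have "\<dots> = - (Gs b * (Gs a * P U'))" using Ga Gb PU' by simp
      also have "\<dots> = - (Gs b * ((-1)^c' \<cdot>\<^sub>m P V))" using IH by simp
      also have "\<dots> = - ((-1)^c' \<cdot>\<^sub>m P (insert b V))" using PbV Gb PV by (simp add: mult_smult_distrib)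
      also have "\<dots> = (-1)^(Suc c') \<cdot>\<^sub>m P (insert b V)"
        by (simp add: mone_smult_mat[symmetric] smult_smult_mat)
      finally show ?thesis unfolding cnt e .
    qed
  qed
qed

lemma P_mult: "S \<subseteq> R \<Longrightarrow> T \<subseteq> R \<Longrightarrow>
   P S * P T = (-1)^(card {(i,j). i\<in>S \<and> j\<in>T \<and> j<i} + card (S\<inter>T)) \<cdot>\<^sub>m P ((S - T) \<union> (T - S))"
proof (induction "card S" arbitrary: S rule: less_induct)
  case less
  have SR: "S \<subseteq> R" and TR: "T \<subseteq> R" by fact+
  have fS: "finite S" using SR fin finite_subset by auto
  have fT: "finite T" using TR fin finite_subset by auto
  have PT: "P T \<in> carrier_mat n n" using P_carrier TR by auto
  show ?case
  proof (cases "S = {}")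
    case True
    then show ?thesis using PT by (simp add: one_smult_mat')
  next
    case False
    define a where "a = Min S"
    define S' where "S' = S - {a}"
    have aS: "a \<in> S" unfolding a_def using Min_in[OF fS False] .
    have amin: "\<forall>x\<in>S'. a < x"
    proof
      fix x assume "x \<in> S'"
      then have "x \<in> S" "x \<noteq> a" unfolding S'_def by auto
      then show "a < x" unfolding a_def using Min_le[OF fS] le_neq_trans by (metis a_def)
    qed
    have fS': "finite S'" using fS S'_def by auto
    have S'R: "S' \<subseteq> R" using SR S'_def by auto
    have aR: "a \<in> R" using aS SR by auto
    have Ga: "Gs a \<in> carrier_mat n n" using Gc aR .
    have PS': "P S' \<in> carrier_mat n n" using P_carrier S'R by auto
    have PS: "P S = Gs a * P S'" unfolding S'_def a_def using P_min[OF False fS] .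
    have Seq: "S = insert a S'" using aS S'_def by auto
    have aS': "a \<notin> S'" using S'_def by auto
    define N' where "N' = card {(i,j). i\<in>S' \<and> j\<in>T \<and> j<i} + card (S'\<inter>T)"
    define V where "V = (S' - T) \<union> (T - S')"
    have VR: "V \<subseteq> R" using S'R TR V_def by auto
    have PV: "P V \<in> carrier_mat n n" using P_carrier VR by auto
    have "card S' < card S" using fS aS S'_def by (meson card_Diff1_less)
    then have IH: "P S' * P T = (-1)^N' \<cdot>\<^sub>m P V" using less S'R TR N'_def V_def by blast
    define c where "c = card {u\<in>V. u<a} + (if a\<in>V then 1 else 0)"
    have L: "Gs a * P V = (-1)^c \<cdot>\<^sub>m P ((V - {a}) \<union> ({a} - V))" unfolding c_def by (rule P_left[OF aR VR])
    have e: "(V - {a}) \<union> ({a} - V) = (S - T) \<union> (T - S)" using Seq aS' V_def by auto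
    have cnt: "card {(i,j). i\<in>S \<and> j\<in>T \<and> j<i} + card (S\<inter>T) = N' + c"
    proof -
      have p1: "{(i,j). i\<in>S \<and> j\<in>T \<and> j<i} = {(i,j). i\<in>S' \<and> j\<in>T \<and> j<i} \<union> ({a} \<times> {j\<in>T. j<a})"
        using Seq by auto
      have fin1: "finite {(i,j). i\<in>S' \<and> j\<in>T \<and> j<i}"
        by (rule finite_subset[of _ "S' \<times> T"]) (use fS' fT in auto)
      have c1: "card {(i,j). i\<in>S \<and> j\<in>T \<and> j<i} = card {(i,j). i\<in>S' \<and> j\<in>T \<and> j<i} + card {j\<in>T. j<a}"
        unfolding p1 by (subst card_Un_disjoint) (use fin1 fT aS' in \<open>auto simp: card_cartesian_product\<close>)
      have c2: "card (S\<inter>T) = card (S'\<inter>T) + (if a \<in> T then 1 else 0)"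
        using Seq aS' fS' by auto
      have c3: "{u\<in>V. u<a} = {j\<in>T. j<a}" using amin V_def by auto
      have c4: "(a \<in> V) = (a \<in> T)" using aS' V_def by auto
      show ?thesis unfolding c_def N'_def c1 c2 c3 c4 by simp
    qed
    have "P S * P T = Gs a * (P S' * P T)" using PS Ga PS' PT by simp
    also have "\<dots> = (-1)^N' \<cdot>\<^sub>m (Gs a * P V)" using IH Ga PV by (simp add: mult_smult_distrib)
    also have "\<dots> = (-1)^(N'+c) \<cdot>\<^sub>m P ((S - T) \<union> (T - S))" unfolding L e by (simp add: smult_smult_mat power_add)
    finally show ?thesis unfolding cnt .
  qed
qed

lemma P_unit: "S \<subseteq> R \<Longrightarrow> mat_H (P S) * P S = 1\<^sub>m n"
proof (induction "card S" arbitrary: S rule: less_induct)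
  case less
  show ?case
  proof (cases "S = {}")
    case True then show ?thesis by simp
  next
    case False
    have fS: "finite S" using less.prems fin finite_subset by auto
    have m: "Min S \<in> S" using Min_in[OF fS False] .
    have "card (S - {Min S}) < card S" using fS m by (meson card_Diff1_less)
    then have IH: "mat_H (P (S - {Min S})) * P (S - {Min S}) = 1\<^sub>m n" using less by auto
    have PS': "P (S - {Min S}) \<in> carrier_mat n n" using P_carrier[of "S - {Min S}"] less.prems by auto
    have G: "Gs (Min S) \<in> carrier_mat n n" using Gc m less.prems by auto
    have GU: "mat_H (Gs (Min S)) * Gs (Min S) = 1\<^sub>m n" using Gu m less.prems by auto
    have HG: "mat_H (Gs (Min S)) \<in> carrier_mat n n" and HP: "mat_H (P (S - {Min S})) \<in> carrier_mat n n"
      using G PS' by auto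
    have "mat_H (P S) * P S = (mat_H (P (S - {Min S})) * mat_H (Gs (Min S))) * (Gs (Min S) * P (S - {Min S}))"
      unfolding P_min[OF False fS] using G PS' by (simp add: mat_H_mult)
    also have "\<dots> = mat_H (P (S - {Min S})) * (mat_H (Gs (Min S)) * (Gs (Min S) * P (S - {Min S})))"
      by (rule assoc_mult_mat[OF HP HG]) (use G PS' in auto)
    also have "\<dots> = mat_H (P (S - {Min S})) * ((mat_H (Gs (Min S)) * Gs (Min S)) * P (S - {Min S}))"
      by (simp add: assoc_mult_mat[OF HG G PS'])
    also have "\<dots> = 1\<^sub>m n" unfolding GU using IH PS' by simp
    finally show ?thesis .
  qed
qed

lemma rep_eq: "S \<subseteq> R \<Longrightarrow> rep_of_gens n Gs (b,S) = (if b then -1 else 1) \<cdot>\<^sub>m P S"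
proof -
  assume "S \<subseteq> R"
  then have PS: "P S \<in> carrier_mat n n" by (rule P_carrier)
  then show ?thesis
    unfolding rep_of_gens_def P_def[symmetric]
    by (cases b) (auto simp: smult1_left one_smult_mat')
qed

lemma rep_hom: assumes RM: "R = {1..M}" shows "rep_of_gens n Gs \<in> hom (Gm M) (Ugrp n)"
proof -
  define sg :: "bool \<Rightarrow> complex" where "sg b = (if b then -1 else 1)" for b
  have sgc: "cnj (sg b) * sg b = 1" for b by (simp add: sg_def)
  have car: "rep_of_gens n Gs x \<in> carrier (Ugrp n)" if "x \<in> carrier (Gm M)" for x
  proof -
    obtain b S where x: "x = (b,S)" by (cases x)
    have SR: "S \<subseteq> R" using that RM x by (auto simp: Gm_def)
    have PS: "P S \<in> carrier_mat n n" using P_carrier SR by auto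
    have "mat_H (sg b \<cdot>\<^sub>m P S) * (sg b \<cdot>\<^sub>m P S) = (cnj (sg b) * sg b) \<cdot>\<^sub>m (mat_H (P S) * P S)"
      using smult_mult_smult[OF mat_H_carrier[OF PS] PS] by (simp add: mat_H_smult)
    also have "\<dots> = 1\<^sub>m n" using sgc P_unit[OF SR] by (simp add: one_smult_mat')
    finally show ?thesis using x rep_eq[OF SR, of b] PS by (simp add: Ugrp_def sg_def)
  qed
  have mul: "rep_of_gens n Gs (Gm_mult x y) = rep_of_gens n Gs x * rep_of_gens n Gs y"
    if "x \<in> carrier (Gm M)" "y \<in> carrier (Gm M)" for x y
  proof -
    obtain a S where x: "x = (a,S)" by (cases x)
    have SR: "S \<subseteq> R" using that RM x by (auto simp: Gm_def)
    obtain b T where y: "y = (b,T)" by (cases y)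
    have TR: "T \<subseteq> R" using that RM y by (auto simp: Gm_def)
    define N where "N = card {(i,j). i\<in>S \<and> j\<in>T \<and> j<i} + card (S\<inter>T)"
    have PS: "P S \<in> carrier_mat n n" using P_carrier SR by auto
    have PT: "P T \<in> carrier_mat n n" using P_carrier TR by auto
    have VR: "(S - T) \<union> (T - S) \<subseteq> R" using SR TR by auto
    have GM: "Gm_mult x y = ((a \<noteq> b) \<noteq> odd N, (S - T) \<union> (T - S))"
      unfolding x y Gm_mult_def N_def by simp
    have sc: "(if (a \<noteq> b) \<noteq> odd N then -1 else 1) = (if a then -1 else 1) * (if b then -1 else 1) * ((-1::complex)^N)"
      by (cases a; cases b; cases "even N") auto
    have "rep_of_gens n Gs x * rep_of_gens n Gs y = ((if a then -1 else 1) \<cdot>\<^sub>m P S) * ((if b then -1 else 1) \<cdot>\<^sub>m P T)"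
      unfolding x y using rep_eq SR TR by simp
    also have "\<dots> = ((if a then -1 else 1) * (if b then -1 else 1)) \<cdot>\<^sub>m (P S * P T)"
      using smult_mult_smult[OF PS PT] by simp
    also have "\<dots> = (if (a \<noteq> b) \<noteq> odd N then -1 else 1) \<cdot>\<^sub>m P ((S - T) \<union> (T - S))"
      unfolding P_mult[OF SR TR] N_def[symmetric] sc by (simp add: smult_smult_mat)
    also have "\<dots> = rep_of_gens n Gs (Gm_mult x y)" unfolding GM using rep_eq[OF VR] by simp
    finally show ?thesis by simp
  qed
  show ?thesis
    unfolding hom_def using car mul by (auto simp: Gm_def Ugrp_def)
qed

end

lemma CC_carrier: "CC (Suc m) z \<in> carrier_mat (2^m) (2^m)"
proof (induction m)
  case 0 then show ?case by simp
next
  case (Suc m)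
  have "CC (Suc (Suc m)) z \<in> carrier_mat (2^m + 2^m) (2^m + 2^m)"
    unfolding CC.simps by (rule four_block_carrier_mat) (use Suc in \<open>auto intro: mat_H_carrier\<close>)
  then show ?case by (simp add: mult_2)
qed

definition ip :: "nat \<Rightarrow> (nat \<Rightarrow> complex) \<Rightarrow> (nat \<Rightarrow> complex) \<Rightarrow> complex" where
  "ip m z w = (\<Sum>l\<in>{1..m}. z l * cnj (w l) + w l * cnj (z l))"

lemma ip_Suc: "ip (Suc m) z w = ip m z w + (z (Suc m) * cnj (w (Suc m)) + w (Suc m) * cnj (z (Suc m)))"
  by (simp add: ip_def)

lemma CC_Suc_Suc: "CC (Suc (Suc m)) z = four_block_mat (CC (Suc m) z) (z (Suc (Suc m)) \<cdot>\<^sub>m 1\<^sub>m (2^m))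
                    ((- cnj (z (Suc (Suc m)))) \<cdot>\<^sub>m 1\<^sub>m (2^m)) (mat_H (CC (Suc m) z))"
  by simp

lemma CC_id: "mat_H (CC (Suc m) z) * CC (Suc m) w + mat_H (CC (Suc m) w) * CC (Suc m) z = ip (Suc m) z w \<cdot>\<^sub>m 1\<^sub>m (2^m)
   \<and> CC (Suc m) z * mat_H (CC (Suc m) w) + CC (Suc m) w * mat_H (CC (Suc m) z) = ip (Suc m) z w \<cdot>\<^sub>m 1\<^sub>m (2^m)"
proof (induction m)
  case 0
  show ?case
    by (auto intro!: eq_matI simp: ip_def scalar_prod_def algebra_simps)
next
  case (Suc m)
  define n where "n = (2::nat)^m"
  define A where "A = CC (Suc m) z"
  define B where "B = CC (Suc m) w"
  define a where "a = z (Suc (Suc m))"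
  define b where "b = w (Suc (Suc m))"
  define c where "c = ip (Suc m) z w"
  have A: "A \<in> carrier_mat n n" and B: "B \<in> carrier_mat n n"
    unfolding A_def B_def n_def by (rule CC_carrier)+
  have AH: "mat_H A \<in> carrier_mat n n" and BH: "mat_H B \<in> carrier_mat n n" using A B by auto
  have dims: "dim_row A = n" "dim_col A = n" "dim_row B = n" "dim_col B = n" using A B by auto
  have IH1: "(mat_H A * B) $$ (i,j) + (mat_H B * A) $$ (i,j) = c * (if i = j then 1 else 0)"
    and IH2: "(A * mat_H B) $$ (i,j) + (B * mat_H A) $$ (i,j) = c * (if i = j then 1 else 0)"
    if "i < n" "j < n" for i j
  proof -
    have "(mat_H A * B + mat_H B * A) $$ (i,j) = (c \<cdot>\<^sub>m 1\<^sub>m n) $$ (i,j)"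
      using Suc unfolding A_def B_def c_def n_def by simp
    then show "(mat_H A * B) $$ (i,j) + (mat_H B * A) $$ (i,j) = c * (if i = j then 1 else 0)"
      using that dims by (simp del: index_mult_mat(1))
    have "(A * mat_H B + B * mat_H A) $$ (i,j) = (c \<cdot>\<^sub>m 1\<^sub>m n) $$ (i,j)"
      using Suc unfolding A_def B_def c_def n_def by simp
    then show "(A * mat_H B) $$ (i,j) + (B * mat_H A) $$ (i,j) = c * (if i = j then 1 else 0)"
      using that dims by (simp del: index_mult_mat(1))
  qed
  have IH1': "(mat_H B * A) $$ (i,j) = c * (if i = j then 1 else 0) - (mat_H A * B) $$ (i,j)"
    and IH2': "(B * mat_H A) $$ (i,j) = c * (if i = j then 1 else 0) - (A * mat_H B) $$ (i,j)"
    if "i < n" "j < n" for i j using IH1[OF that] IH2[OF that] by (simp_all add: algebra_simps)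
  have CZ: "CC (Suc (Suc m)) z = four_block_mat A (a \<cdot>\<^sub>m 1\<^sub>m n) ((- cnj a) \<cdot>\<^sub>m 1\<^sub>m n) (mat_H A)"
    unfolding A_def a_def n_def by (rule CC_Suc_Suc)
  have CW: "CC (Suc (Suc m)) w = four_block_mat B (b \<cdot>\<^sub>m 1\<^sub>m n) ((- cnj b) \<cdot>\<^sub>m 1\<^sub>m n) (mat_H B)"
    unfolding B_def b_def n_def by (rule CC_Suc_Suc)
  have HZ: "mat_H (CC (Suc (Suc m)) z) = four_block_mat (mat_H A) ((- a) \<cdot>\<^sub>m 1\<^sub>m n) (cnj a \<cdot>\<^sub>m 1\<^sub>m n) A"
    unfolding CZ by (subst mat_H_four[OF A]) (use A in auto)
  have HW: "mat_H (CC (Suc (Suc m)) w) = four_block_mat (mat_H B) ((- b) \<cdot>\<^sub>m 1\<^sub>m n) (cnj b \<cdot>\<^sub>m 1\<^sub>m n) B"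
    unfolding CW by (subst mat_H_four[OF B]) (use B in auto)
  have one: "1\<^sub>m (2 ^ Suc m) = four_block_mat (1\<^sub>m n) (0\<^sub>m n n) (0\<^sub>m n n) (1\<^sub>m n)"
    by (simp add: n_def mult_2)
  have ipc: "ip (Suc (Suc m)) z w = c + (a * cnj b + b * cnj a)"
    unfolding c_def a_def b_def by (rule ip_Suc)
  note carr = A B AH BH one_carrier_mat smult_carrier_mat zero_carrier_mat
  have rhs: "ip (Suc (Suc m)) z w \<cdot>\<^sub>m 1\<^sub>m (2 ^ Suc m) = four_block_mat
      ((c + (a * cnj b + b * cnj a)) \<cdot>\<^sub>m 1\<^sub>m n) ((c + (a * cnj b + b * cnj a)) \<cdot>\<^sub>m 0\<^sub>m n n)
      ((c + (a * cnj b + b * cnj a)) \<cdot>\<^sub>m 0\<^sub>m n n) ((c + (a * cnj b + b * cnj a)) \<cdot>\<^sub>m 1\<^sub>m n)"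
    unfolding one ipc by (rule smult_four_block_mat) auto
  show ?case
  proof
    show "mat_H (CC (Suc (Suc m)) z) * CC (Suc (Suc m)) w + mat_H (CC (Suc (Suc m)) w) * CC (Suc (Suc m)) z =
      ip (Suc (Suc m)) z w \<cdot>\<^sub>m 1\<^sub>m (2 ^ Suc m)"
      unfolding HZ HW unfolding CZ CW rhs
      apply (subst mult_four_block_mat[of _ n n _ n _ n _ _ n _ n], (auto simp: carr)[8])+
      apply (subst add_four_block_mat[of _ n n _ n _ n], (auto intro!: carrier_matI simp: dims)[8])
      apply (rule cong_four_block_mat)
      by (rule eq_matI; simp add: dims IH1' IH2' smult1_left smult1_right algebra_simps del: index_mult_mat(1))+
    show "CC (Suc (Suc m)) z * mat_H (CC (Suc (Suc m)) w) + CC (Suc (Suc m)) w * mat_H (CC (Suc (Suc m)) z) =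
      ip (Suc (Suc m)) z w \<cdot>\<^sub>m 1\<^sub>m (2 ^ Suc m)"
      unfolding HZ HW unfolding CZ CW rhs
      apply (subst mult_four_block_mat[of _ n n _ n _ n _ _ n _ n], (auto simp: carr)[8])+
      apply (subst add_four_block_mat[of _ n n _ n _ n], (auto intro!: carrier_matI simp: dims)[8])
      apply (rule cong_four_block_mat)
      by (rule eq_matI; simp add: dims IH1' IH2' smult1_left smult1_right algebra_simps del: index_mult_mat(1))+
  qed
qed

definition bv :: "nat \<Rightarrow> complex \<Rightarrow> nat \<Rightarrow> complex" where
  "bv p \<alpha> = (\<lambda>l. if l = p then \<alpha> else 0)"

lemma ip_bv: "ip m (bv p \<alpha>) (bv q \<beta>) = (if p = q \<and> 1 \<le> p \<and> p \<le> m then \<alpha> * cnj \<beta> + \<beta> * cnj \<alpha> else 0)"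
proof (cases "p = q \<and> 1 \<le> p \<and> p \<le> m")
  case True
  then have "ip m (bv p \<alpha>) (bv q \<beta>) = (\<Sum>l\<in>{1..m}. if l = p then \<alpha> * cnj \<beta> + \<beta> * cnj \<alpha> else 0)"
    unfolding ip_def bv_def by (intro sum.cong) auto
  also have "\<dots> = \<alpha> * cnj \<beta> + \<beta> * cnj \<alpha>" using True by simp
  finally show ?thesis using True by simp
next
  case False
  then have "ip m (bv p \<alpha>) (bv q \<beta>) = (\<Sum>l\<in>{1..m}. 0)"
    unfolding ip_def bv_def by (intro sum.cong) auto
  then show ?thesis by (simp only: if_not_P[OF False]) simp
qed

lemma CC_e1: "CC (Suc m) (bv 1 1) = 1\<^sub>m (2^m)"
proof (induction m)
  case 0
  show ?case by (rule eq_matI) (auto simp: bv_def)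
next
  case (Suc m)
  have z: "bv 1 1 (Suc (Suc m)) = 0" by (simp add: bv_def)
  have "CC (Suc (Suc m)) (bv 1 1) = four_block_mat (1\<^sub>m (2^m)) (0\<^sub>m (2^m) (2^m)) (0\<^sub>m (2^m) (2^m)) (1\<^sub>m (2^m))"
    unfolding CC_Suc_Suc Suc z by (intro cong_four_block_mat; rule eq_matI; simp)
  then show ?case by (simp add: mult_2)
qed

lemma mat_eq_half: assumes "M \<in> carrier_mat n n" "M + M = (2::complex) \<cdot>\<^sub>m 1\<^sub>m n" shows "M = 1\<^sub>m n"
proof (rule eq_matI)
  fix i j assume "i < dim_row (1\<^sub>m n)" "j < dim_col (1\<^sub>m n)"
  then have ij: "i < n" "j < n" by auto
  have "(M + M) $$ (i,j) = (2 \<cdot>\<^sub>m 1\<^sub>m n) $$ (i,j)" using assms by simp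
  then show "M $$ (i,j) = 1\<^sub>m n $$ (i,j)" using ij assms(1) by (auto split: if_splits)
qed (use assms in auto)

lemma neg_swap: "- (X::complex mat) = Y \<Longrightarrow> X = - Y"
  by (rule eq_matI) auto

lemma gen_rel:
  fixes m :: nat and p :: "nat \<Rightarrow> nat" and a :: "nat \<Rightarrow> complex"
  assumes p0: "p 0 = 1" and a0: "a 0 = 1"
    and rng: "\<And>j. j < 2*Suc m \<Longrightarrow> 1 \<le> p j \<and> p j \<le> Suc m \<and> a j * cnj (a j) = 1"
    and dist: "\<And>j j'. j < 2*Suc m \<Longrightarrow> j' < 2*Suc m \<Longrightarrow> j \<noteq> j' \<Longrightarrow>
        p j \<noteq> p j' \<or> a j * cnj (a j') + a j' * cnj (a j) = 0"
  defines "E \<equiv> \<lambda>j. CC (Suc m) (bv (p j) (a j))"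
  shows "E 0 = 1\<^sub>m (2^m)"
    and "\<And>j. j < 2*Suc m \<Longrightarrow> E j \<in> carrier_mat (2^m) (2^m)"
    and "\<And>j. 0 < j \<Longrightarrow> j < 2*Suc m \<Longrightarrow> mat_H (E j) = - E j"
    and "\<And>j. j < 2*Suc m \<Longrightarrow> mat_H (E j) * E j = 1\<^sub>m (2^m)"
    and "\<And>j. 0 < j \<Longrightarrow> j < 2*Suc m \<Longrightarrow> E j * E j = - 1\<^sub>m (2^m)"
    and "\<And>j j'. 0 < j \<Longrightarrow> j < 2*Suc m \<Longrightarrow> 0 < j' \<Longrightarrow> j' < 2*Suc m \<Longrightarrow> j \<noteq> j' \<Longrightarrow>
          E j * E j' = - (E j' * E j)"
proof -
  define n where "n = (2::nat)^m"
  show E0: "E 0 = 1\<^sub>m (2^m)" unfolding E_def p0 a0 by (rule CC_e1)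
  show carr: "E j \<in> carrier_mat (2^m) (2^m)" for j unfolding E_def by (rule CC_carrier)
  have ipjj': "ip (Suc m) (bv (p j) (a j)) (bv (p j') (a j')) = (if j = j' then 2 else 0)"
    if "j < 2*Suc m" "j' < 2*Suc m" for j j'
  proof (cases "j = j'")
    case True
    then show ?thesis using rng[OF that(1)] by (simp add: ip_bv mult.commute)
  next
    case False
    then show ?thesis using dist[OF that False] by (auto simp add: ip_bv)
  qed
  have id1: "mat_H (E j) * E j' + mat_H (E j') * E j = (if j = j' then 2 else 0) \<cdot>\<^sub>m 1\<^sub>m (2^m)"
    if "j < 2*Suc m" "j' < 2*Suc m" for j j'
    using CC_id[of m "bv (p j) (a j)" "bv (p j') (a j')"] ipjj'[OF that] unfolding E_def by simp
  show unit: "mat_H (E j) * E j = 1\<^sub>m (2^m)" if "j < 2*Suc m" for j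
    using id1[OF that that] carr[of j] by (intro mat_eq_half[of _ "2^m"]) auto
  show H: "mat_H (E j) = - E j" if "0 < j" "j < 2*Suc m" for j
  proof -
    have "mat_H (E 0) * E j + mat_H (E j) * E 0 = 0 \<cdot>\<^sub>m 1\<^sub>m (2^m)"
      using id1[of 0 j] that by simp
    then have eq: "E j + mat_H (E j) = 0 \<cdot>\<^sub>m 1\<^sub>m (2^m)" unfolding E0 using carr[of j] by simp
    show ?thesis
    proof (rule eq_matI)
      fix i i' assume "i < dim_row (- E j)" "i' < dim_col (- E j)"
      then have ii: "i < 2^m" "i' < 2^m" using carr[of j] by auto
      have "(E j + mat_H (E j)) $$ (i,i') = (0 \<cdot>\<^sub>m 1\<^sub>m (2^m)) $$ (i,i')" using eq by simp
      then show "mat_H (E j) $$ (i,i') = (- E j) $$ (i,i')" using ii carr[of j]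
        by (simp add: eq_neg_iff_add_eq_0 add.commute)
    qed (use carr[of j] in auto)
  qed
  show "E j * E j = - 1\<^sub>m (2^m)" if "0 < j" "j < 2*Suc m" for j
    using unit[OF that(2)] H[OF that] carr[of j] by (simp add: neg_swap)
  show "E j * E j' = - (E j' * E j)" if "0 < j" "j < 2*Suc m" "0 < j'" "j' < 2*Suc m" "j \<noteq> j'" for j j'
  proof -
    have eq: "- (E j * E j') + - (E j' * E j) = 0 \<cdot>\<^sub>m 1\<^sub>m (2^m)"
      using id1[of j j'] that H[of j] H[of j'] carr[of j] carr[of j'] by simp
    have cj: "E j \<in> carrier_mat (2^m) (2^m)" "E j' \<in> carrier_mat (2^m) (2^m)" by (rule carr)+
    show ?thesis
    proof (rule eq_matI)
      fix i i' assume "i < dim_row (- (E j' * E j))" "i' < dim_col (- (E j' * E j))"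
      then have ii: "i < 2^m" "i' < 2^m" using cj by auto
      have "(- (E j * E j') + - (E j' * E j)) $$ (i,i') = (0 \<cdot>\<^sub>m 1\<^sub>m (2^m)) $$ (i,i')" using eq by simp
      then show "(E j * E j') $$ (i,i') = (- (E j' * E j)) $$ (i,i')" using ii cj
        by (simp add: eq_neg_iff_add_eq_0 add.commute del: index_mult_mat(1))
    qed (use cj in auto)
  qed
qed

lemma smult_one_mat_vec: "(v::complex vec) \<in> carrier_vec n \<Longrightarrow> (c \<cdot>\<^sub>m 1\<^sub>m n) *\<^sub>v v = c \<cdot>\<^sub>v v"
proof (rule eq_vecI)
  fix i assume v: "v \<in> carrier_vec n" and "i < dim_vec (c \<cdot>\<^sub>v v)"
  then have i: "i < n" by auto
  have "((c \<cdot>\<^sub>m 1\<^sub>m n) *\<^sub>v v) $ i = (\<Sum>j\<in>{0..<n}. (if i = j then c else 0) * v $ j)"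
    using i v by (auto simp: scalar_prod_def intro!: sum.cong)
  also have "\<dots> = (\<Sum>j\<in>{0..<n}. if i = j then c * v $ j else 0)" by (rule sum.cong) auto
  also have "\<dots> = c * v $ i" using i by simp
  finally show "((c \<cdot>\<^sub>m 1\<^sub>m n) *\<^sub>v v) $ i = (c \<cdot>\<^sub>v v) $ i" using i v by simp
qed auto

lemma zero_mat_vec: "(v::complex vec) \<in> carrier_vec m \<Longrightarrow> 0\<^sub>m n m *\<^sub>v v = 0\<^sub>v n"
  by (rule eq_vecI) (auto simp: scalar_prod_def)

lemma mat_vec_zero: "(A::complex mat) \<in> carrier_mat k n \<Longrightarrow> A *\<^sub>v 0\<^sub>v n = 0\<^sub>v k"
  by (intro eq_vecI) (auto simp: scalar_prod_def)

lemma smult_append: "c \<cdot>\<^sub>v (a @\<^sub>v b) = (c \<cdot>\<^sub>v a) @\<^sub>v (c \<cdot>\<^sub>v (b::complex vec))"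
  by (rule eq_vecI) auto


lemma CC_zero: "(\<And>l. 1 \<le> l \<Longrightarrow> l \<le> Suc m \<Longrightarrow> z l = 0) \<Longrightarrow> CC (Suc m) z = 0\<^sub>m (2^m) (2^m)"
proof (induction m)
  case 0
  then show ?case by (intro eq_matI) auto
next
  case (Suc m)
  have e1: "CC (Suc m) z = 0\<^sub>m (2^m) (2^m)" using Suc by auto
  have e2: "z (Suc (Suc m)) = 0" using Suc.prems by auto
  have "CC (Suc (Suc m)) z = four_block_mat (0\<^sub>m (2^m) (2^m)) (0\<^sub>m (2^m) (2^m)) (0\<^sub>m (2^m) (2^m)) (0\<^sub>m (2^m) (2^m))"
    unfolding CC_Suc_Suc e1 e2 by (intro cong_four_block_mat; rule eq_matI; simp)
  then show ?case by (simp add: mult_2)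
qed

definition MS :: "nat \<Rightarrow> complex mat set" where
  "MS m = {CC (Suc m) (bv p \<alpha>) | p \<alpha>. 1 \<le> p \<and> p \<le> Suc m \<and> (\<alpha> = 1 \<or> \<alpha> = \<i>)}"

lemma block_act:
  assumes A: "A \<in> carrier_mat n n" and a: "a \<in> carrier_vec n" and b: "b \<in> carrier_vec n"
  shows "four_block_mat A (c \<cdot>\<^sub>m 1\<^sub>m n) ((- cnj c) \<cdot>\<^sub>m 1\<^sub>m n) (mat_H A) *\<^sub>v (a @\<^sub>v b)
     = (A *\<^sub>v a + c \<cdot>\<^sub>v b) @\<^sub>v ((- cnj c) \<cdot>\<^sub>v a + mat_H A *\<^sub>v b)"
  using assms by (subst four_block_mat_mult_vec[of _ n n _ n _ n]) (auto simp: smult_one_mat_vec)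

lemma irred_MS: "invariant_subspace (2^m) (MS m) W \<Longrightarrow> W = {0\<^sub>v (2^m)} \<or> W = carrier_vec (2^m)"
proof (induction m arbitrary: W)
  case 0
  have Wc: "W \<subseteq> carrier_vec 1" and W0: "0\<^sub>v 1 \<in> W" and Wsm: "\<And>c v. v \<in> W \<Longrightarrow> c \<cdot>\<^sub>v v \<in> W"
    using "0.prems" unfolding invariant_subspace_def by auto
  show ?case
  proof (cases "W \<subseteq> {0\<^sub>v 1}")
    case True then show ?thesis using W0 by auto
  next
    case False
    then obtain v where vW: "v \<in> W" and v0: "v \<noteq> 0\<^sub>v 1" by auto
    have vc: "v \<in> carrier_vec 1" using vW Wc by auto
    have nz: "v $ 0 \<noteq> 0"
    proof
      assume "v $ 0 = 0"
      then have "v = 0\<^sub>v 1" using vc by (intro eq_vecI) auto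
      then show False using v0 by simp
    qed
    have "carrier_vec 1 \<subseteq> W"
    proof
      fix w :: "complex vec" assume wc: "w \<in> carrier_vec 1"
      have "w = (w $ 0 / v $ 0) \<cdot>\<^sub>v v" using wc vc nz by (intro eq_vecI) auto
      then show "w \<in> W" using Wsm[OF vW] by metis
    qed
    then show ?thesis using Wc by auto
  qed
next
  case (Suc m)
  define n where "n = (2::nat)^m"
  have N: "(2::nat)^Suc m = n + n" unfolding n_def by simp
  have Wc: "W \<subseteq> carrier_vec (n+n)" and W0: "0\<^sub>v (n+n) \<in> W"
    and Wadd: "\<And>v w. v \<in> W \<Longrightarrow> w \<in> W \<Longrightarrow> v + w \<in> W"
    and Wsm: "\<And>c v. v \<in> W \<Longrightarrow> c \<cdot>\<^sub>v v \<in> W"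
    and Wmat: "\<And>A v. A \<in> MS (Suc m) \<Longrightarrow> v \<in> W \<Longrightarrow> A *\<^sub>v v \<in> W"
    using Suc.prems unfolding invariant_subspace_def N by auto
  define J where "J = CC (Suc (Suc m)) (bv (Suc (Suc m)) 1)"
  define K where "K = CC (Suc (Suc m)) (bv (Suc (Suc m)) \<i>)"
  have JM: "J \<in> MS (Suc m)" unfolding J_def MS_def by auto
  have KM: "K \<in> MS (Suc m)" unfolding K_def MS_def by auto
  have z0: "CC (Suc m) (bv (Suc (Suc m)) \<alpha>) = 0\<^sub>m n n" for \<alpha>
    unfolding n_def by (rule CC_zero) (auto simp: bv_def)
  have Z: "(0\<^sub>m n n :: complex mat) \<in> carrier_mat n n" by simp
  have Jact: "J *\<^sub>v (a @\<^sub>v b) = b @\<^sub>v (- a)" if "a \<in> carrier_vec n" "b \<in> carrier_vec n" for a b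
  proof -
    have JF: "J = four_block_mat (0\<^sub>m n n) (1 \<cdot>\<^sub>m 1\<^sub>m n) ((- cnj 1) \<cdot>\<^sub>m 1\<^sub>m n) (mat_H (0\<^sub>m n n))"
      unfolding J_def CC_Suc_Suc z0 n_def[symmetric] by (simp add: bv_def)
    have "J *\<^sub>v (a @\<^sub>v b) = (0\<^sub>m n n *\<^sub>v a + 1 \<cdot>\<^sub>v b) @\<^sub>v ((- cnj 1) \<cdot>\<^sub>v a + mat_H (0\<^sub>m n n) *\<^sub>v b)"
      unfolding JF by (rule block_act[OF Z that])
    then show ?thesis using that
      by (simp add: zero_mat_vec; intro eq_vecI; auto)
  qed
  have Kact: "K *\<^sub>v (a @\<^sub>v b) = (\<i> \<cdot>\<^sub>v b) @\<^sub>v (\<i> \<cdot>\<^sub>v a)" if "a \<in> carrier_vec n" "b \<in> carrier_vec n" for a b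
  proof -
    have KF: "K = four_block_mat (0\<^sub>m n n) (\<i> \<cdot>\<^sub>m 1\<^sub>m n) ((- cnj \<i>) \<cdot>\<^sub>m 1\<^sub>m n) (mat_H (0\<^sub>m n n))"
      unfolding K_def CC_Suc_Suc z0 n_def[symmetric] by (simp add: bv_def)
    have "K *\<^sub>v (a @\<^sub>v b) = (0\<^sub>m n n *\<^sub>v a + \<i> \<cdot>\<^sub>v b) @\<^sub>v ((- cnj \<i>) \<cdot>\<^sub>v a + mat_H (0\<^sub>m n n) *\<^sub>v b)"
      unfolding KF by (rule block_act[OF Z that])
    then show ?thesis using that
      by (simp add: zero_mat_vec; intro eq_vecI; auto)
  qed
  have Xact: "CC (Suc (Suc m)) (bv p \<alpha>) *\<^sub>v (a @\<^sub>v b) = (CC (Suc m) (bv p \<alpha>) *\<^sub>v a) @\<^sub>v (mat_H (CC (Suc m) (bv p \<alpha>)) *\<^sub>v b)"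
    if "p \<le> Suc m" "a \<in> carrier_vec n" "b \<in> carrier_vec n" for p \<alpha> a b
  proof -
    have A: "CC (Suc m) (bv p \<alpha>) \<in> carrier_mat n n" unfolding n_def by (rule CC_carrier)
    have XF: "CC (Suc (Suc m)) (bv p \<alpha>) = four_block_mat (CC (Suc m) (bv p \<alpha>)) (0 \<cdot>\<^sub>m 1\<^sub>m n) ((- cnj 0) \<cdot>\<^sub>m 1\<^sub>m n) (mat_H (CC (Suc m) (bv p \<alpha>)))"
      unfolding CC_Suc_Suc n_def[symmetric] using that by (simp add: bv_def)
    have "CC (Suc (Suc m)) (bv p \<alpha>) *\<^sub>v (a @\<^sub>v b) = (CC (Suc m) (bv p \<alpha>) *\<^sub>v a + 0 \<cdot>\<^sub>v b) @\<^sub>v ((- cnj 0) \<cdot>\<^sub>v a + mat_H (CC (Suc m) (bv p \<alpha>)) *\<^sub>v b)"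
      unfolding XF by (rule block_act[OF A that(2,3)])
    then show ?thesis using that A
      by (simp; intro eq_vecI; auto)
  qed
  define W1 where "W1 = {a \<in> carrier_vec n. a @\<^sub>v 0\<^sub>v n \<in> W}"
  have inv1: "invariant_subspace (2^m) (MS m) W1"
    unfolding invariant_subspace_def n_def[symmetric]
  proof (intro conjI ballI allI)
    show "W1 \<subseteq> carrier_vec n" unfolding W1_def by auto
    have z: "0\<^sub>v n @\<^sub>v 0\<^sub>v n = 0\<^sub>v (n+n)" by (intro eq_vecI) auto
    have "0\<^sub>v n @\<^sub>v 0\<^sub>v n \<in> W" by (subst z) (rule W0)
    then show "0\<^sub>v n \<in> W1" unfolding W1_def by auto
  next
    fix a b assume "a \<in> W1" "b \<in> W1"
    then have a: "a \<in> carrier_vec n" "a @\<^sub>v 0\<^sub>v n \<in> W" and b: "b \<in> carrier_vec n" "b @\<^sub>v 0\<^sub>v n \<in> W"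
      unfolding W1_def by auto
    have "(a + b) @\<^sub>v 0\<^sub>v n = (a @\<^sub>v 0\<^sub>v n) + (b @\<^sub>v 0\<^sub>v n)" using a b by (intro eq_vecI) auto
    then show "a + b \<in> W1" unfolding W1_def using a b Wadd by auto
  next
    fix c a assume "a \<in> W1"
    then have a: "a \<in> carrier_vec n" "a @\<^sub>v 0\<^sub>v n \<in> W" unfolding W1_def by auto
    have "(c \<cdot>\<^sub>v a) @\<^sub>v 0\<^sub>v n = c \<cdot>\<^sub>v (a @\<^sub>v 0\<^sub>v n)" using a by (intro eq_vecI) auto
    then show "c \<cdot>\<^sub>v a \<in> W1" unfolding W1_def using a Wsm by auto
  next
    fix A a assume AM: "A \<in> MS m" and "a \<in> W1"
    then have a: "a \<in> carrier_vec n" "a @\<^sub>v 0\<^sub>v n \<in> W" unfolding W1_def by auto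
    obtain p \<alpha> where A: "A = CC (Suc m) (bv p \<alpha>)" and p: "1 \<le> p" "p \<le> Suc m" and al: "\<alpha> = 1 \<or> \<alpha> = \<i>"
      using AM unfolding MS_def by auto
    have Ac: "A \<in> carrier_mat n n" unfolding A n_def by (rule CC_carrier)
    have XM: "CC (Suc (Suc m)) (bv p \<alpha>) \<in> MS (Suc m)" unfolding MS_def using p al le_SucI[OF p(2)] by blast
    have "CC (Suc (Suc m)) (bv p \<alpha>) *\<^sub>v (a @\<^sub>v 0\<^sub>v n) = (A *\<^sub>v a) @\<^sub>v 0\<^sub>v n"
      using Xact[OF p(2) a(1)] A Ac mat_vec_zero[OF mat_H_carrier[OF Ac]] by simp
    then have "(A *\<^sub>v a) @\<^sub>v 0\<^sub>v n \<in> W" using Wmat[OF XM a(2)] by simp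
    then show "A *\<^sub>v a \<in> W1" unfolding W1_def using Ac a by auto
  qed
  have IH: "W1 = {0\<^sub>v n} \<or> W1 = carrier_vec n" using Suc.IH[OF inv1] unfolding n_def .
  show ?case
  proof (cases "W \<subseteq> {0\<^sub>v (n+n)}")
    case True then show ?thesis using W0 N by auto
  next
    case False
    then obtain v where vW: "v \<in> W" and v0: "v \<noteq> 0\<^sub>v (n+n)" by auto
    have vc: "v \<in> carrier_vec (n+n)" using vW Wc by auto
    define a where "a = vec_first v n"
    define b where "b = vec_last v n"
    have ac: "a \<in> carrier_vec n" and bc: "b \<in> carrier_vec n" unfolding a_def b_def by auto
    have vab: "v = a @\<^sub>v b" unfolding a_def b_def using vc by simp
    have "J *\<^sub>v (K *\<^sub>v v) = (\<i> \<cdot>\<^sub>v a) @\<^sub>v (- (\<i> \<cdot>\<^sub>v b))"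
      unfolding vab using ac bc by (simp add: Kact Jact)
    moreover have "J *\<^sub>v (K *\<^sub>v v) \<in> W" using Wmat[OF JM Wmat[OF KM vW]] .
    ultimately have u1W: "(\<i> \<cdot>\<^sub>v a) @\<^sub>v (- (\<i> \<cdot>\<^sub>v b)) \<in> W" by simp
    have "(1/2) \<cdot>\<^sub>v (v + (- \<i>) \<cdot>\<^sub>v ((\<i> \<cdot>\<^sub>v a) @\<^sub>v (- (\<i> \<cdot>\<^sub>v b)))) = a @\<^sub>v 0\<^sub>v n"
      unfolding vab using ac bc by (intro eq_vecI) (auto simp: algebra_simps)
    moreover have "(1/2) \<cdot>\<^sub>v (v + (- \<i>) \<cdot>\<^sub>v ((\<i> \<cdot>\<^sub>v a) @\<^sub>v (- (\<i> \<cdot>\<^sub>v b)))) \<in> W"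
      using Wsm Wadd vW u1W by blast
    ultimately have aW1: "a \<in> W1" unfolding W1_def using ac by auto
    have "(1/2) \<cdot>\<^sub>v (v + \<i> \<cdot>\<^sub>v ((\<i> \<cdot>\<^sub>v a) @\<^sub>v (- (\<i> \<cdot>\<^sub>v b)))) = 0\<^sub>v n @\<^sub>v b"
      unfolding vab using ac bc by (intro eq_vecI) (auto simp: algebra_simps)
    moreover have "(1/2) \<cdot>\<^sub>v (v + \<i> \<cdot>\<^sub>v ((\<i> \<cdot>\<^sub>v a) @\<^sub>v (- (\<i> \<cdot>\<^sub>v b)))) \<in> W"
      using Wsm Wadd vW u1W by blast
    ultimately have "0\<^sub>v n @\<^sub>v b \<in> W" by simp
    then have "J *\<^sub>v (0\<^sub>v n @\<^sub>v b) \<in> W" using Wmat[OF JM] by blast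
    moreover have "J *\<^sub>v (0\<^sub>v n @\<^sub>v b) = b @\<^sub>v 0\<^sub>v n" using Jact[of "0\<^sub>v n" b] bc
      by (simp; intro eq_vecI; auto)
    ultimately have bW1: "b \<in> W1" unfolding W1_def using bc by auto
    have W1all: "W1 = carrier_vec n"
    proof (rule ccontr)
      assume "W1 \<noteq> carrier_vec n"
      then have "W1 = {0\<^sub>v n}" using IH by auto
      then have "a = 0\<^sub>v n" "b = 0\<^sub>v n" using aW1 bW1 by auto
      then have "v = 0\<^sub>v (n+n)" unfolding vab by (intro eq_vecI) auto
      then show False using v0 by simp
    qed
    have "carrier_vec (n+n) \<subseteq> W"
    proof
      fix w :: "complex vec" assume wc: "w \<in> carrier_vec (n+n)"
      define x where "x = vec_first w n"
      define y where "y = vec_last w n"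
      have xc: "x \<in> carrier_vec n" and yc: "y \<in> carrier_vec n" unfolding x_def y_def by auto
      have wxy: "w = x @\<^sub>v y" unfolding x_def y_def using wc by simp
      have xW: "x @\<^sub>v 0\<^sub>v n \<in> W" using W1all xc unfolding W1_def by auto
      have yW: "y @\<^sub>v 0\<^sub>v n \<in> W" using W1all yc unfolding W1_def by auto
      have "(-1) \<cdot>\<^sub>v (J *\<^sub>v (y @\<^sub>v 0\<^sub>v n)) \<in> W" using Wsm Wmat[OF JM yW] by blast
      moreover have "(-1) \<cdot>\<^sub>v (J *\<^sub>v (y @\<^sub>v 0\<^sub>v n)) = 0\<^sub>v n @\<^sub>v y" using Jact[of y "0\<^sub>v n"] yc
        by (simp; intro eq_vecI; auto)
      ultimately have "0\<^sub>v n @\<^sub>v y \<in> W" by simp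
      then have "(x @\<^sub>v 0\<^sub>v n) + (0\<^sub>v n @\<^sub>v y) \<in> W" using Wadd xW by blast
      moreover have "(x @\<^sub>v 0\<^sub>v n) + (0\<^sub>v n @\<^sub>v y) = w" unfolding wxy using xc yc by (intro eq_vecI) auto
      ultimately show "w \<in> W" by simp
    qed
    then show ?thesis using Wc N by auto
  qed
qed


definition pj :: "nat \<Rightarrow> nat \<Rightarrow> nat" where "pj k j = (if j+1 \<le> k then j+1 else j+1-k)"
definition aj :: "nat \<Rightarrow> nat \<Rightarrow> complex" where "aj k j = (if j+1 \<le> k then 1 else \<i>)"
definition amj :: "nat \<Rightarrow> nat \<Rightarrow> complex" where
  "amj k j = (if j+1 \<le> k then 1 else if j+1-k = k then -\<i> else \<i>)"

lemma Fcoef_bv: "Fcoef D k j = D (bv (if j \<le> k then j else j - k) (if j \<le> k then 1 else \<i>))"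
  by (cases "j \<le> k") (simp_all add: Fcoef_def bv_def)

lemma Egen_CC: "Egen (CC k) k j = CC k (bv (pj k j) (aj k j))"
  unfolding Egen_def Fcoef_bv pj_def aj_def by (cases "j+1 \<le> k") simp_all

lemma bv_upd: "(bv q c)(k := cnj (bv q c k)) = bv q (if q = k then cnj c else c)"
  by (rule ext) (auto simp: bv_def)

lemma Egen_CCm: "Egen (CCminus k) k j = CC k (bv (pj k j) (amj k j))"
  unfolding Egen_def Fcoef_bv pj_def amj_def CCminus_def bv_upd by (cases "j+1 \<le> k") simp_all

lemma gen_conds:
  assumes aa: "aa = aj (Suc m) \<or> aa = amj (Suc m)"
  shows "pj (Suc m) 0 = 1" "aa 0 = 1"
    "\<And>j. j < 2*Suc m \<Longrightarrow> 1 \<le> pj (Suc m) j \<and> pj (Suc m) j \<le> Suc m \<and> aa j * cnj (aa j) = 1"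
    "\<And>j j'. j < 2*Suc m \<Longrightarrow> j' < 2*Suc m \<Longrightarrow> j \<noteq> j' \<Longrightarrow>
        pj (Suc m) j \<noteq> pj (Suc m) j' \<or> aa j * cnj (aa j') + aa j' * cnj (aa j) = 0"
  using aa by (auto simp: pj_def aj_def amj_def)

lemma CC_neg: "CC (Suc m) (\<lambda>l. - z l) = - CC (Suc m) z"
proof (induction m)
  case 0
  then show ?case by (intro eq_matI) auto
next
  case (Suc m)
  have A: "CC (Suc m) z \<in> carrier_mat (2^m) (2^m)" by (rule CC_carrier)
  show ?case
    unfolding CC_Suc_Suc Suc
    by (rule eq_matI) (use A in \<open>auto simp: mult_2\<close>)
qed


definition GA :: "nat \<Rightarrow> nat \<Rightarrow> complex mat" where
  "GA m i = CC (Suc m) (bv (pj (Suc m) i) (aj (Suc m) i))"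
definition GB :: "nat \<Rightarrow> nat \<Rightarrow> complex mat" where
  "GB m i = CC (Suc m) (bv (pj (Suc m) i) (amj (Suc m) i))"

lemma Ggen_CC: "Ggen (CC (Suc m)) (Suc m) = GA m"
proof (rule ext)
  fix i
  have e0: "Egen (CC (Suc m)) (Suc m) 0 = 1\<^sub>m (2^m)"
  proof -
    have "pj (Suc m) 0 = 1" "aj (Suc m) 0 = 1" by (simp_all add: pj_def aj_def)
    then show ?thesis unfolding Egen_CC using CC_e1 by simp
  qed
  show "Ggen (CC (Suc m)) (Suc m) i = GA m i"
    unfolding Ggen_def unfolding e0 unfolding GA_def Egen_CC by (simp add: left_mult_one_mat[OF CC_carrier])
qed

lemma Ggen_CCm: "Ggen (CCminus (Suc m)) (Suc m) = GB m"
proof (rule ext)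
  fix i
  have e0: "Egen (CCminus (Suc m)) (Suc m) 0 = 1\<^sub>m (2^m)"
  proof -
    have "pj (Suc m) 0 = 1" "amj (Suc m) 0 = 1" by (simp_all add: pj_def amj_def)
    then show ?thesis unfolding Egen_CCm using CC_e1 by simp
  qed
  show "Ggen (CCminus (Suc m)) (Suc m) i = GB m i"
    unfolding Ggen_def unfolding e0 unfolding GB_def Egen_CCm by (simp add: left_mult_one_mat[OF CC_carrier])
qed

lemma gensys_aa:
  assumes aa: "aa = aj (Suc m) \<or> aa = amj (Suc m)"
  shows "gensys (2^m) {1..Suc (2*m)} (\<lambda>i. CC (Suc m) (bv (pj (Suc m) i) (aa i)))"
proof -
  note c = gen_conds[OF aa]
  note r0 = gen_rel[where p = "pj (Suc m)" and a = aa and m = m]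
  have r2: "\<And>j. j < 2 * Suc m \<Longrightarrow> CC (Suc m) (bv (pj (Suc m) j) (aa j)) \<in> carrier_mat (2^m) (2^m)"
    by (rule r0(2), rule c(1), rule c(2), (rule c(3); assumption), (rule c(4); assumption), assumption)
  have r4: "\<And>j. j < 2 * Suc m \<Longrightarrow> mat_H (CC (Suc m) (bv (pj (Suc m) j) (aa j))) * CC (Suc m) (bv (pj (Suc m) j) (aa j)) = 1\<^sub>m (2^m)"
    by (rule r0(4), rule c(1), rule c(2), (rule c(3); assumption), (rule c(4); assumption), assumption)
  have r5: "\<And>j. 0 < j \<Longrightarrow> j < 2 * Suc m \<Longrightarrow> CC (Suc m) (bv (pj (Suc m) j) (aa j)) * CC (Suc m) (bv (pj (Suc m) j) (aa j)) = - 1\<^sub>m (2^m)"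
    by (rule r0(5), rule c(1), rule c(2), (rule c(3); assumption), (rule c(4); assumption), assumption+)
  have r6: "\<And>j j'. 0 < j \<Longrightarrow> j < 2 * Suc m \<Longrightarrow> 0 < j' \<Longrightarrow> j' < 2 * Suc m \<Longrightarrow> j \<noteq> j' \<Longrightarrow>
     CC (Suc m) (bv (pj (Suc m) j) (aa j)) * CC (Suc m) (bv (pj (Suc m) j') (aa j')) =
        - (CC (Suc m) (bv (pj (Suc m) j') (aa j')) * CC (Suc m) (bv (pj (Suc m) j) (aa j)))"
    by (rule r0(6), rule c(1), rule c(2), (rule c(3); assumption), (rule c(4); assumption), assumption+)
  note r = r2 r2 r2 r4 r5 r6
  show ?thesis
  proof
    fix i j assume i: "i \<in> {1..Suc (2*m)}" and j: "j \<in> {1..Suc (2*m)}"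
    then have i': "0 < i" "i < 2 * Suc m" and j': "0 < j" "j < 2 * Suc m" by auto
    show "CC (Suc m) (bv (pj (Suc m) i) (aa i)) \<in> carrier_mat (2^m) (2^m)" using r2[OF i'(2)] .
    show "CC (Suc m) (bv (pj (Suc m) i) (aa i)) * CC (Suc m) (bv (pj (Suc m) i) (aa i)) = - 1\<^sub>m (2^m)"
      using r5[OF i'] .
    show "mat_H (CC (Suc m) (bv (pj (Suc m) i) (aa i))) * CC (Suc m) (bv (pj (Suc m) i) (aa i)) = 1\<^sub>m (2^m)"
      using r4[OF i'(2)] .
    assume "i \<noteq> j"
    then show "CC (Suc m) (bv (pj (Suc m) i) (aa i)) * CC (Suc m) (bv (pj (Suc m) j) (aa j)) =
        - (CC (Suc m) (bv (pj (Suc m) j) (aa j)) * CC (Suc m) (bv (pj (Suc m) i) (aa i)))"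
      using r6[OF i' j'] by simp
  qed simp
qed

lemma gensys_A: "gensys (2^m) {1..Suc (2*m)} (GA m)"
  using gensys_aa[of "aj (Suc m)" m] unfolding GA_def[abs_def] by simp

lemma gensys_B: "gensys (2^m) {1..Suc (2*m)} (GB m)"
  using gensys_aa[of "amj (Suc m)" m] unfolding GB_def[abs_def] by simp

lemma MS_cases:
  assumes "A \<in> MS m"
  shows "A = 1\<^sub>m (2^m) \<or> (\<exists>j\<in>{1..Suc (2*m)}. A = GA m j)"
    and "A = 1\<^sub>m (2^m) \<or> (\<exists>j\<in>{1..Suc (2*m)}. A = GB m j \<or> A = - GB m j)"
proof -
  obtain p \<alpha> where A: "A = CC (Suc m) (bv p \<alpha>)" and p: "1 \<le> p" "p \<le> Suc m" and al: "\<alpha> = 1 \<or> \<alpha> = \<i>"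
    using assms unfolding MS_def by auto
  have "A = 1\<^sub>m (2^m) \<or> (\<exists>j\<in>{1..Suc (2*m)}. A = GA m j \<and> (A = GB m j \<or> A = - GB m j))"
  proof (cases "p = 1 \<and> \<alpha> = 1")
    case True
    then show ?thesis using A CC_e1 by simp
  next
    case False
    define j where "j = (if \<alpha> = 1 then p - 1 else p + m)"
    have jR: "j \<in> {1..Suc (2*m)}" using p al False unfolding j_def by auto
    have pj: "pj (Suc m) j = p" using p al False unfolding j_def pj_def by auto
    have aj: "aj (Suc m) j = \<alpha>" using p al False unfolding j_def aj_def by auto
    have GAj: "A = GA m j" unfolding GA_def pj aj A ..
    have "A = GB m j \<or> A = - GB m j"
    proof (cases "p = Suc m \<and> \<alpha> = \<i>")
      case True
      have "amj (Suc m) j = - \<i>" using True unfolding j_def amj_def by auto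
      have bvn: "bv p (- \<i>) = (\<lambda>l. - bv p \<i> l)" by (auto simp: bv_def)
      have "GB m j = CC (Suc m) (\<lambda>l. - bv p \<i> l)"
        unfolding GB_def pj \<open>amj (Suc m) j = - \<i>\<close> bvn ..
      also have "\<dots> = - A" unfolding A CC_neg using True by simp
      finally have "- A = GB m j" by simp
      then show ?thesis by (simp add: neg_swap)
    next
      case False
      have "amj (Suc m) j = \<alpha>" using p al False \<open>\<not> (p = 1 \<and> \<alpha> = 1)\<close> unfolding j_def amj_def by auto
      then show ?thesis unfolding GB_def pj A by simp
    qed
    then show ?thesis using GAj jR by auto
  qed
  then show "A = 1\<^sub>m (2^m) \<or> (\<exists>j\<in>{1..Suc (2*m)}. A = GA m j)"
    and "A = 1\<^sub>m (2^m) \<or> (\<exists>j\<in>{1..Suc (2*m)}. A = GB m j \<or> A = - GB m j)" by auto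
qed

lemma (in gensys) rep_single: "i \<in> R \<Longrightarrow> rep_of_gens n Gs (False, {i}) = Gs i"
  using rep_eq[of "{i}" False] P_insert_min[of "{}" i] Gc[of i] by (simp add: one_smult_mat')

lemma (in gensys) irred_rep:
  assumes RM: "R = {1..Suc (2*m)}" and n: "n = 2^m"
    and MSc: "\<And>A. A \<in> MS m \<Longrightarrow> A = 1\<^sub>m (2^m) \<or> (\<exists>j\<in>{1..Suc (2*m)}. A = Gs j \<or> A = - Gs j)"
  shows "irreducible_rep (Gm (Suc (2*m))) n (rep_of_gens n Gs)"
  unfolding irreducible_rep_def
proof (intro conjI allI impI)
  show "0 < n" using n by simp
  fix W assume inv: "invariant_subspace n (rep_of_gens n Gs ` carrier (Gm (Suc (2*m)))) W"
  have "invariant_subspace (2^m) (MS m) W"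
    unfolding invariant_subspace_def
  proof (intro conjI ballI allI)
    show "W \<subseteq> carrier_vec (2^m)" "0\<^sub>v (2^m) \<in> W" using inv n unfolding invariant_subspace_def by auto
  next
    fix v w assume "v \<in> W" "w \<in> W" then show "v + w \<in> W" using inv unfolding invariant_subspace_def by auto
  next
    fix c v assume "v \<in> W" then show "c \<cdot>\<^sub>v v \<in> W" using inv unfolding invariant_subspace_def by auto
  next
    fix A v assume AM: "A \<in> MS m" and vW: "v \<in> W"
    have vc: "v \<in> carrier_vec n" using inv vW unfolding invariant_subspace_def by auto
    have img: "Gs j *\<^sub>v v \<in> W" if "j \<in> R" for j
    proof -
      have "(False, {j}) \<in> carrier (Gm (Suc (2*m)))" using that RM by (auto simp: Gm_def)
      then have "Gs j \<in> rep_of_gens n Gs ` carrier (Gm (Suc (2*m)))" using rep_single[OF that] by force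
      then show ?thesis using inv vW unfolding invariant_subspace_def by auto
    qed
    consider "A = 1\<^sub>m (2^m)" | j where "j \<in> R" "A = Gs j" | j where "j \<in> R" "A = - Gs j"
      using MSc[OF AM] RM by auto
    then show "A *\<^sub>v v \<in> W"
    proof cases
      case 1 then show ?thesis using vc vW n by simp
    next
      case 2 then show ?thesis using img by simp
    next
      case 3
      have "A *\<^sub>v v = (-1) \<cdot>\<^sub>v (Gs j *\<^sub>v v)" using 3 Gc[OF 3(1)] vc
        by (intro eq_vecI) auto
      then show ?thesis using img[OF 3(1)] inv unfolding invariant_subspace_def by auto
    qed
  qed
  then show "W = {0\<^sub>v n} \<or> W = carrier_vec n" using irred_MS n by auto
qed


lemma foldr_carrier: "(\<And>i. G i \<in> carrier_mat n n) \<Longrightarrow> X \<in> carrier_mat n n \<Longrightarrow>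
   foldr (\<lambda>i M. G i * M) L X \<in> carrier_mat n n"
  by (induction L) (auto intro: mult_carrier_mat)

lemma foldr_uminus: "(\<And>i. G i \<in> carrier_mat n n) \<Longrightarrow> (X::complex mat) \<in> carrier_mat n n \<Longrightarrow>
   foldr (\<lambda>i M. G i * M) L (- X) = - foldr (\<lambda>i M. G i * M) L X"
proof (induction L)
  case Nil then show ?case by simp
next
  case (Cons a L)
  have "foldr (\<lambda>i M. G i * M) L X \<in> carrier_mat n n" using foldr_carrier Cons.prems by blast
  then have "G a * - foldr (\<lambda>i M. G i * M) L X = - (G a * foldr (\<lambda>i M. G i * M) L X)"
    using Cons.prems(1)[of a] by (intro uminus_mult_right_mat) auto
  then show ?case using Cons by simp
qed

lemma (in gensys) central_scalar:
  assumes n: "n = 2^m" and RM: "R = {1..Suc (2*m)}"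
    and MSc: "\<And>A. A \<in> MS m \<Longrightarrow> A = 1\<^sub>m (2^m) \<or> (\<exists>j\<in>R. A = Gs j \<or> A = - Gs j)"
  shows "\<exists>c. c \<noteq> 0 \<and> (\<forall>v\<in>carrier_vec n. P R *\<^sub>v v = c \<cdot>\<^sub>v v)"
proof -
  define Z where "Z = P R"
  have Zc: "Z \<in> carrier_mat n n" unfolding Z_def using P_carrier by simp
  have comm: "Z * Gs j = Gs j * Z" if jR: "j \<in> R" for j
  proof -
    have Pj: "P {j} = Gs j" using P_insert_min[of "{}" j] Gc[OF jR] by simp
    define x where "x = card {(a, b). a \<in> R \<and> b \<in> {j} \<and> b < a}"
    define y where "y = card {(a, b). a \<in> {j} \<and> b \<in> R \<and> b < a}"
    have j1: "1 \<le> j" "j \<le> Suc (2*m)" using jR RM by auto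
    have "{(a, b). a \<in> R \<and> b \<in> {j} \<and> b < a} = {j<..Suc (2*m)} \<times> {j}" using RM j1 by auto
    then have xv: "x = Suc (2*m) - j" unfolding x_def by (simp add: card_cartesian_product)
    have "{(a, b). a \<in> {j} \<and> b \<in> R \<and> b < a} = {j} \<times> {1..<j}" using RM j1 by auto
    then have yv: "y = j - 1" unfolding y_def by (simp add: card_cartesian_product)
    have ev: "even (x + y)" using xv yv j1 by simp
    have pw: "(-1::complex)^(x + 1) = (-1)^(y + 1)"
    proof (cases "even x")
      case True then have "even y" using ev by simp
      then show ?thesis using True by simp
    next
      case False then have "odd y" using ev by simp
      then show ?thesis using False by simp
    qed
    have s: "(R - {j}) \<union> ({j} - R) = ({j} - R) \<union> (R - {j})" by auto
    have "Z * Gs j = (-1)^(x + card (R \<inter> {j})) \<cdot>\<^sub>m P ((R - {j}) \<union> ({j} - R))"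
      unfolding Z_def Pj[symmetric] x_def using P_mult[of R "{j}"] jR by simp
    also have "\<dots> = (-1)^(y + card ({j} \<inter> R)) \<cdot>\<^sub>m P (({j} - R) \<union> (R - {j}))"
      using jR pw s by simp
    also have "\<dots> = Gs j * Z"
      unfolding Z_def Pj[symmetric] y_def using P_mult[of "{j}" R] jR by simp
    finally show ?thesis .
  qed
  have commMS: "A \<in> carrier_mat n n \<and> Z * A = A * Z" if AM: "A \<in> MS m" for A
  proof -
    consider "A = 1\<^sub>m n" | j where "j \<in> R" "A = Gs j" | j where "j \<in> R" "A = - Gs j"
      using MSc[OF AM] n by auto
    then show ?thesis
    proof cases
      case 1 then show ?thesis using Zc by simp
    next
      case 2 then show ?thesis using comm Gc by simp
    next
      case 3 then show ?thesis using comm[OF 3(1)] Gc[OF 3(1)] Zc by simp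
    qed
  qed
  have eig: "invariant_subspace (2^m) (MS m) {v \<in> carrier_vec n. Z *\<^sub>v v = c \<cdot>\<^sub>v v}" for c
    unfolding invariant_subspace_def n[symmetric]
  proof (intro conjI ballI allI)
    show "{v \<in> carrier_vec n. Z *\<^sub>v v = c \<cdot>\<^sub>v v} \<subseteq> carrier_vec n" by auto
    show "0\<^sub>v n \<in> {v \<in> carrier_vec n. Z *\<^sub>v v = c \<cdot>\<^sub>v v}" using Zc by (auto simp: mat_vec_zero)
  next
    fix v w assume v: "v \<in> {v \<in> carrier_vec n. Z *\<^sub>v v = c \<cdot>\<^sub>v v}" and w: "w \<in> {v \<in> carrier_vec n. Z *\<^sub>v v = c \<cdot>\<^sub>v v}"
    then show "v + w \<in> {v \<in> carrier_vec n. Z *\<^sub>v v = c \<cdot>\<^sub>v v}"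
      using Zc by (auto simp: mult_add_distrib_mat_vec[OF Zc] smult_add_distrib_vec)
  next
    fix d v assume v: "v \<in> {v \<in> carrier_vec n. Z *\<^sub>v v = c \<cdot>\<^sub>v v}"
    then show "d \<cdot>\<^sub>v v \<in> {v \<in> carrier_vec n. Z *\<^sub>v v = c \<cdot>\<^sub>v v}"
      using Zc by (auto simp: mult_mat_vec[OF Zc] smult_smult_assoc mult.commute)
  next
    fix A v assume AM: "A \<in> MS m" and v: "v \<in> {v \<in> carrier_vec n. Z *\<^sub>v v = c \<cdot>\<^sub>v v}"
    have Ac: "A \<in> carrier_mat n n" and ZA: "Z * A = A * Z" using commMS[OF AM] by auto
    have vc: "v \<in> carrier_vec n" and Zv: "Z *\<^sub>v v = c \<cdot>\<^sub>v v" using v by auto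
    have "Z *\<^sub>v (A *\<^sub>v v) = (Z * A) *\<^sub>v v" using Zc Ac vc by simp
    also have "\<dots> = A *\<^sub>v (Z *\<^sub>v v)" unfolding ZA using Zc Ac vc by simp
    also have "\<dots> = c \<cdot>\<^sub>v (A *\<^sub>v v)" unfolding Zv using mult_mat_vec[OF Ac vc] .
    finally show "A *\<^sub>v v \<in> {v \<in> carrier_vec n. Z *\<^sub>v v = c \<cdot>\<^sub>v v}" using Ac vc by auto
  qed
  define N where "N = card {(i, j). i \<in> R \<and> j \<in> R \<and> j < i} + card (R \<inter> R)"
  have ZZ: "Z * Z = (-1)^N \<cdot>\<^sub>m 1\<^sub>m n" unfolding Z_def N_def using P_mult[of R R] by simp
  define mu :: complex where "mu = (if even N then 1 else \<i>)"
  have mu2: "mu * mu = (-1)^N" unfolding mu_def by simp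
  have mu0: "mu \<noteq> 0" unfolding mu_def by simp
  have W1: "{v \<in> carrier_vec n. Z *\<^sub>v v = mu \<cdot>\<^sub>v v} = {0\<^sub>v n} \<or> {v \<in> carrier_vec n. Z *\<^sub>v v = mu \<cdot>\<^sub>v v} = carrier_vec n"
    using irred_MS[OF eig[of mu]] n by simp
  have W2: "{v \<in> carrier_vec n. Z *\<^sub>v v = (- mu) \<cdot>\<^sub>v v} = {0\<^sub>v n} \<or> {v \<in> carrier_vec n. Z *\<^sub>v v = (- mu) \<cdot>\<^sub>v v} = carrier_vec n"
    using irred_MS[OF eig[of "- mu"]] n by simp
  show ?thesis
  proof (cases "{v \<in> carrier_vec n. Z *\<^sub>v v = mu \<cdot>\<^sub>v v} = carrier_vec n")
    case True then show ?thesis using mu0 unfolding Z_def by blast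
  next
    case F1: False
    show ?thesis
    proof (cases "{v \<in> carrier_vec n. Z *\<^sub>v v = (- mu) \<cdot>\<^sub>v v} = carrier_vec n")
      case True
      then have "\<forall>v\<in>carrier_vec n. Z *\<^sub>v v = (- mu) \<cdot>\<^sub>v v" by blast
      then show ?thesis using mu0 unfolding Z_def by (intro exI[of _ "- mu"]) auto
    next
      case F2: False
      have E1: "{v \<in> carrier_vec n. Z *\<^sub>v v = mu \<cdot>\<^sub>v v} = {0\<^sub>v n}" using W1 F1 by auto
      have E2: "{v \<in> carrier_vec n. Z *\<^sub>v v = (- mu) \<cdot>\<^sub>v v} = {0\<^sub>v n}" using W2 F2 by auto
      have n0: "0 < n" using n by simp
      define e :: "complex vec" where "e = unit_vec n 0"
      have ec: "e \<in> carrier_vec n" unfolding e_def by simp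
      define w where "w = Z *\<^sub>v e"
      have wc: "w \<in> carrier_vec n" unfolding w_def using Zc ec by simp
      have Zw: "Z *\<^sub>v w = (mu * mu) \<cdot>\<^sub>v e"
      proof -
        have "Z *\<^sub>v (Z *\<^sub>v e) = (Z * Z) *\<^sub>v e" by (rule assoc_mult_mat_vec[symmetric, OF Zc Zc ec])
        also have "\<dots> = (-1)^N \<cdot>\<^sub>v e" unfolding ZZ by (rule smult_one_mat_vec[OF ec])
        finally show ?thesis unfolding w_def mu2 .
      qed
      define v1 where "v1 = (1 / (2*mu)) \<cdot>\<^sub>v (w + mu \<cdot>\<^sub>v e)"
      define v2 where "v2 = (1 / (2*mu)) \<cdot>\<^sub>v (mu \<cdot>\<^sub>v e + (-1) \<cdot>\<^sub>v w)"
      have v1c: "v1 \<in> carrier_vec n" and v2c: "v2 \<in> carrier_vec n" unfolding v1_def v2_def using wc ec by auto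
      have "Z *\<^sub>v v1 = (1 / (2*mu)) \<cdot>\<^sub>v (Z *\<^sub>v w + mu \<cdot>\<^sub>v (Z *\<^sub>v e))"
        unfolding v1_def using Zc wc ec
        by (simp add: mult_mat_vec[OF Zc] mult_add_distrib_mat_vec[OF Zc])
      also have "\<dots> = mu \<cdot>\<^sub>v v1" unfolding Zw w_def[symmetric] v1_def
        using wc ec by (intro eq_vecI) (auto simp: field_simps)
      finally have "v1 \<in> {v \<in> carrier_vec n. Z *\<^sub>v v = mu \<cdot>\<^sub>v v}" using v1c by auto
      then have v10: "v1 = 0\<^sub>v n" using E1 by auto
      have "Z *\<^sub>v v2 = (1 / (2*mu)) \<cdot>\<^sub>v (mu \<cdot>\<^sub>v (Z *\<^sub>v e) + (-1) \<cdot>\<^sub>v (Z *\<^sub>v w))"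
        unfolding v2_def using Zc wc ec
        by (simp add: mult_mat_vec[OF Zc] mult_add_distrib_mat_vec[OF Zc])
      also have "\<dots> = (- mu) \<cdot>\<^sub>v v2" unfolding Zw w_def[symmetric] v2_def
        using wc ec by (intro eq_vecI) (auto simp: field_simps)
      finally have "v2 \<in> {v \<in> carrier_vec n. Z *\<^sub>v v = (- mu) \<cdot>\<^sub>v v}" using v2c by auto
      then have v20: "v2 = 0\<^sub>v n" using E2 by auto
      have "v1 $ 0 + v2 $ 0 = e $ 0" unfolding v1_def v2_def using wc ec n0 mu0
        by (simp add: field_simps)
      then show ?thesis using v10 v20 n0 unfolding e_def by simp
    qed
  qed
qed


lemma GB_GA_eq: "i < Suc (2*m) \<Longrightarrow> GB m i = GA m i"
  unfolding GA_def GB_def amj_def aj_def by auto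

lemma GB_GA_last: "GB m (Suc (2*m)) = - GA m (Suc (2*m))"
proof -
  have p: "pj (Suc m) (Suc (2*m)) = Suc m" by (simp add: pj_def)
  have a1: "amj (Suc m) (Suc (2*m)) = - \<i>" by (simp add: amj_def)
  have a2: "aj (Suc m) (Suc (2*m)) = \<i>" by (simp add: aj_def)
  have bvn: "bv (Suc m) (- \<i>) = (\<lambda>l. - bv (Suc m) \<i> l)" by (auto simp: bv_def)
  show ?thesis unfolding GA_def GB_def p a1 a2 bvn CC_neg ..
qed

lemma PB_PA: "gensys.P (2^m) (GB m) {1..Suc (2*m)} = - gensys.P (2^m) (GA m) {1..Suc (2*m)}"
proof -
  interpret A: gensys "2^m" "{1..Suc (2*m)}" "GA m" by (rule gensys_A)
  interpret B: gensys "2^m" "{1..Suc (2*m)}" "GB m" by (rule gensys_B)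
  define fA where "fA = (\<lambda>i M. GA m i * M)"
  define fB where "fB = (\<lambda>i M. GB m i * M)"
  have sl: "sorted_list_of_set {1..Suc (2*m)} = [1..<Suc (2*m)] @ [Suc (2*m)]"
  proof -
    have "{1..Suc (2*m)} = {1..<Suc (Suc (2*m))}" by auto
    then show ?thesis by simp
  qed
  have GAc: "GA m i \<in> carrier_mat (2^m) (2^m)" for i unfolding GA_def by (rule CC_carrier)
  have "foldr fB [1..<Suc (2*m)] (GB m (Suc (2*m)) * 1\<^sub>m (2^m)) = foldr fA [1..<Suc (2*m)] (GB m (Suc (2*m)) * 1\<^sub>m (2^m))"
    unfolding fA_def fB_def by (rule foldr_cong) (auto simp: GB_GA_eq)
  also have "\<dots> = foldr fA [1..<Suc (2*m)] (- (GA m (Suc (2*m)) * 1\<^sub>m (2^m)))"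
  proof -
    have "- GA m (Suc (2*m)) * 1\<^sub>m (2^m) = - (GA m (Suc (2*m)) * 1\<^sub>m (2^m))"
      by (rule uminus_mult_left_mat) (use GAc[of "Suc (2*m)"] in auto)
    then show ?thesis unfolding GB_GA_last by simp
  qed
  also have "\<dots> = - foldr fA [1..<Suc (2*m)] (GA m (Suc (2*m)) * 1\<^sub>m (2^m))"
    unfolding fA_def by (rule foldr_uminus[OF GAc]) (simp add: right_mult_one_mat[OF GAc] GAc)
  finally show ?thesis
    unfolding A.P_def B.P_def sl fA_def fB_def by simp
qed

theorem lemma3:
  fixes k :: nat
  assumes "k \<ge> 1"
  shows "induced_rep (CC k) k (2^(k-1)) \<in> hom (Gm (2*k-1)) (Ugrp (2^(k-1))) \<and>
         induced_rep (CCminus k) k (2^(k-1)) \<in> hom (Gm (2*k-1)) (Ugrp (2^(k-1))) \<and>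
         irreducible_rep (Gm (2*k-1)) (2^(k-1)) (induced_rep (CC k) k (2^(k-1))) \<and>
         irreducible_rep (Gm (2*k-1)) (2^(k-1)) (induced_rep (CCminus k) k (2^(k-1))) \<and>
         \<not> equivalent_reps (Gm (2*k-1)) (2^(k-1))
             (induced_rep (CC k) k (2^(k-1))) (induced_rep (CCminus k) k (2^(k-1)))"
proof -
  obtain m where k: "k = Suc m" using assms by (cases k) auto
  have e1: "k - 1 = m" and e2: "2*k - 1 = Suc (2*m)" using k by auto
  interpret A: gensys "2^m" "{1..Suc (2*m)}" "GA m" by (rule gensys_A)
  interpret B: gensys "2^m" "{1..Suc (2*m)}" "GB m" by (rule gensys_B)
  have rA: "induced_rep (CC k) k (2^(k-1)) = rep_of_gens (2^m) (GA m)"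
    unfolding induced_rep_def e1 unfolding k Ggen_CC ..
  have rB: "induced_rep (CCminus k) k (2^(k-1)) = rep_of_gens (2^m) (GB m)"
    unfolding induced_rep_def e1 unfolding k Ggen_CCm ..
  have MSA: "\<And>A. A \<in> MS m \<Longrightarrow> A = 1\<^sub>m (2^m) \<or> (\<exists>j\<in>{1..Suc (2*m)}. A = GA m j \<or> A = - GA m j)"
    using MS_cases(1) by blast
  have MSB: "\<And>A. A \<in> MS m \<Longrightarrow> A = 1\<^sub>m (2^m) \<or> (\<exists>j\<in>{1..Suc (2*m)}. A = GB m j \<or> A = - GB m j)"
    using MS_cases(2) by blast
  have h1: "rep_of_gens (2^m) (GA m) \<in> hom (Gm (Suc (2*m))) (Ugrp (2^m))" by (rule A.rep_hom) simp
  have h2: "rep_of_gens (2^m) (GB m) \<in> hom (Gm (Suc (2*m))) (Ugrp (2^m))" by (rule B.rep_hom) simp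
  have i1: "irreducible_rep (Gm (Suc (2*m))) (2^m) (rep_of_gens (2^m) (GA m))"
    by (rule A.irred_rep[OF refl refl MSA])
  have i2: "irreducible_rep (Gm (Suc (2*m))) (2^m) (rep_of_gens (2^m) (GB m))"
    by (rule B.irred_rep[OF refl refl MSB])
  have ne: "\<not> equivalent_reps (Gm (Suc (2*m))) (2^m) (rep_of_gens (2^m) (GA m)) (rep_of_gens (2^m) (GB m))"
  proof
    assume "equivalent_reps (Gm (Suc (2*m))) (2^m) (rep_of_gens (2^m) (GA m)) (rep_of_gens (2^m) (GB m))"
    then obtain T where Tc: "T \<in> carrier_mat (2^m) (2^m)" and Ti: "invertible_mat T"
      and Teq: "\<And>g. g \<in> carrier (Gm (Suc (2*m))) \<Longrightarrow> T * rep_of_gens (2^m) (GA m) g = rep_of_gens (2^m) (GB m) g * T"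
      unfolding equivalent_reps_def by blast
    define R where "R = {1..Suc (2*m)}"
    define Z where "Z = A.P R"
    obtain c where c0: "c \<noteq> 0" and cZ: "\<And>v. v \<in> carrier_vec (2^m) \<Longrightarrow> Z *\<^sub>v v = c \<cdot>\<^sub>v v"
      using A.central_scalar[OF refl refl MSA] unfolding Z_def R_def by blast
    have Zc: "Z \<in> carrier_mat (2^m) (2^m)" unfolding Z_def R_def by (rule A.P_carrier) simp
    have gR: "(False, R) \<in> carrier (Gm (Suc (2*m)))" unfolding R_def by (simp add: Gm_def)
    have rAZ: "rep_of_gens (2^m) (GA m) (False, R) = Z"
      unfolding Z_def R_def using A.rep_eq[of "{1..Suc (2*m)}" False] by (simp add: one_smult_mat')
    have rBZ: "rep_of_gens (2^m) (GB m) (False, R) = - Z"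
      unfolding Z_def R_def using B.rep_eq[of "{1..Suc (2*m)}" False] PB_PA[of m]
      by (simp add: one_smult_mat')
    have TZ: "T * Z = - Z * T" using Teq[OF gR] rAZ rBZ by simp
    have T0: "T *\<^sub>v v = 0\<^sub>v (2^m)" if vc: "v \<in> carrier_vec (2^m)" for v
    proof -
      have Tv: "T *\<^sub>v v \<in> carrier_vec (2^m)" using Tc vc by simp
      have "c \<cdot>\<^sub>v (T *\<^sub>v v) = T *\<^sub>v (Z *\<^sub>v v)" unfolding cZ[OF vc] using mult_mat_vec[OF Tc vc] by simp
      also have "\<dots> = (T * Z) *\<^sub>v v" using Tc Zc vc by simp
      also have "\<dots> = - (Z *\<^sub>v (T *\<^sub>v v))" unfolding TZ using Tc Zc vc by simp
      also have "\<dots> = - (c \<cdot>\<^sub>v (T *\<^sub>v v))" using cZ[OF Tv] by simp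
      finally have eq: "c \<cdot>\<^sub>v (T *\<^sub>v v) = - (c \<cdot>\<^sub>v (T *\<^sub>v v))" .
      show ?thesis
      proof (rule eq_vecI)
        fix i assume "i < dim_vec (0\<^sub>v (2^m) :: complex vec)"
        then have i: "i < 2^m" by simp
        have "(c \<cdot>\<^sub>v (T *\<^sub>v v)) $ i = (- (c \<cdot>\<^sub>v (T *\<^sub>v v))) $ i" using eq by simp
        then have "c * (T *\<^sub>v v) $ i = - (c * (T *\<^sub>v v) $ i)" using i Tc by simp
        then show "(T *\<^sub>v v) $ i = 0\<^sub>v (2^m) $ i" using c0 i by simp
      qed (use Tc in auto)
    qed
    obtain B where TB: "T * B = 1\<^sub>m (2^m)" and BT: "B * T = 1\<^sub>m (dim_row B)"
      using Ti Tc unfolding invertible_mat_def inverts_mat_def by auto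
    have Bc: "B \<in> carrier_mat (2^m) (2^m)"
    proof -
      have "dim_col B = 2^m" using arg_cong[OF TB, of dim_col] by simp
      moreover have "dim_row B = 2^m" using arg_cong[OF BT, of dim_col] Tc by simp
      ultimately show ?thesis by auto
    qed
    define e :: "complex vec" where "e = unit_vec (2^m) 0"
    have ec: "e \<in> carrier_vec (2^m)" unfolding e_def by simp
    have "e = (T * B) *\<^sub>v e" unfolding TB using ec by simp
    also have "\<dots> = T *\<^sub>v (B *\<^sub>v e)" using Tc Bc ec by simp
    also have "\<dots> = 0\<^sub>v (2^m)" using T0 Bc ec by simp
    finally have "e $ 0 = 0\<^sub>v (2^m) $ 0" by simp
    then show False unfolding e_def by simp
  qed
  show ?thesis unfolding rA rB unfolding e1 e2 using h1 h2 i1 i2 ne by simp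
qed

end
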